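(* Let $(V,g)$ be a Euclidean vector space of dimension $n\ge3$. Let $R$ be an algebraic curvature tensor on $V$ and $\mathring{R}$ its induced curvature operator of the second kind, with eigenvalue average $\bar\lambda$. If $1\le p\le\frac n2$ and $\mathring{R}\in\mathcal{C}\left(\frac{(n-1)p}{2},\theta\right)$ (with $\theta>-1$), then for every orthonormal basis $\{e_i\}_{i=1}^n$ of $V$, $$\sum_{i=1}^pR_{ii}\ge\frac{(n-1)p}{n-p+2}\bigl(1-(n-p+1)\theta\bigr)\bar\lambda,$$ where $R_{ii}=\operatorname{Ric}(e_i,e_i)$.
   Context: $S^2_0(V)$ is the space of traceless symmetric two-tensors, of dimension $N=\frac{(n-1)(n+2)}{2}$. An algebraic curvature tensor is $R\in S^2(\wedge^2V)$ satisfying the first Bianchi identity. $\mathring{R}=\pi\circ\overline{R}:S^2_0(V)\to S^2_0(V)$ with $\overline{R}(h)_{ij}=\sum_{k,l}R_{iklj}h_{kl}$ and $\pi$ the projection onto traceless tensors. For a symmetric operator with eigenvalues $\lambda_1\le\cdots\le\lambda_N$ and average $\bar\lambda$, write $\lambda_1+\cdots+\lambda_\alpha:=\lambda_1+\cdots+\lambda_{[\alpha]}+(\alpha-[\alpha])\lambda_{[\alpha]+1}$; $\mathcal{C}(\alpha,\theta)$ is the cone of symmetric operators on $S^2_0(V)$ with $\alpha^{-1}(\lambda_1+\cdots+\lambda_\alpha)\ge-\theta\bar\lambda$. *)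

theory Defs
  imports Complex_Main
begin

text \<open>V = R^n with its standard inner product; vectors are nat => real (components with index < n);
  two-tensors are nat => nat => real; four-tensors are given by their components R a b c d
  with respect to the standard orthonormal basis.\<close>

definition alg_curv_tensor :: "nat \<Rightarrow> (nat \<Rightarrow> nat \<Rightarrow> nat \<Rightarrow> nat \<Rightarrow> real) \<Rightarrow> bool" where
  "alg_curv_tensor n R \<longleftrightarrow>
     (\<forall>i<n. \<forall>j<n. \<forall>k<n. \<forall>l<n.
        R i j k l = - R j i k l \<and>
        R i j k l = - R i j l k \<and>
        R i j k l = R k l i j \<and>
        R i j k l + R j k i l + R k i j l = 0)"

definition tensor4 :: "nat \<Rightarrow> (nat \<Rightarrow> nat \<Rightarrow> nat \<Rightarrow> nat \<Rightarrow> real) \<Rightarrow>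
    (nat \<Rightarrow> real) \<Rightarrow> (nat \<Rightarrow> real) \<Rightarrow> (nat \<Rightarrow> real) \<Rightarrow> (nat \<Rightarrow> real) \<Rightarrow> real" where
  "tensor4 n R x y z w =
     (\<Sum>a<n. \<Sum>b<n. \<Sum>c<n. \<Sum>d<n. R a b c d * x a * y b * z c * w d)"

text \<open>Ricci tensor Ric(x,y) = sum_k R(x,e_k,y,e_k) (convention: R(e_i,e_j,e_i,e_j) is the sectional
  curvature, so that the round sphere has positive curvature operator of the second kind).\<close>
definition ricci :: "nat \<Rightarrow> (nat \<Rightarrow> nat \<Rightarrow> nat \<Rightarrow> nat \<Rightarrow> real) \<Rightarrow> (nat \<Rightarrow> real) \<Rightarrow> (nat \<Rightarrow> real) \<Rightarrow> real" where
  "ricci n R x y = (\<Sum>k<n. tensor4 n R x (\<lambda>a. if a = k then 1 else 0) y (\<lambda>a. if a = k then 1 else 0))"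

definition orthonormal_basis :: "nat \<Rightarrow> (nat \<Rightarrow> nat \<Rightarrow> real) \<Rightarrow> bool" where
  "orthonormal_basis n e \<longleftrightarrow>
     (\<forall>i<n. \<forall>j<n. (\<Sum>a<n. e i a * e j a) = (if i = j then 1 else 0))"

definition S20 :: "nat \<Rightarrow> (nat \<Rightarrow> nat \<Rightarrow> real) set" where
  "S20 n = {h. (\<forall>i j. h i j = h j i) \<and> (\<forall>i j. (n \<le> i \<or> n \<le> j) \<longrightarrow> h i j = 0)
               \<and> (\<Sum>i<n. h i i) = 0}"

definition dimS20 :: "nat \<Rightarrow> nat" where
  "dimS20 n = (n - 1) * (n + 2) div 2"

definition tensor_inner :: "nat \<Rightarrow> (nat \<Rightarrow> nat \<Rightarrow> real) \<Rightarrow> (nat \<Rightarrow> nat \<Rightarrow> real) \<Rightarrow> real" where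
  "tensor_inner n h k = (\<Sum>i<n. \<Sum>j<n. h i j * k i j)"

definition Rbar :: "nat \<Rightarrow> (nat \<Rightarrow> nat \<Rightarrow> nat \<Rightarrow> nat \<Rightarrow> real) \<Rightarrow> (nat \<Rightarrow> nat \<Rightarrow> real) \<Rightarrow> nat \<Rightarrow> nat \<Rightarrow> real" where
  "Rbar n R h i j = (if i < n \<and> j < n then (\<Sum>k<n. \<Sum>l<n. R i k l j * h k l) else 0)"

text \<open>Curvature operator of the second kind: pi o Rbar, pi the projection onto traceless tensors.\<close>
definition Rring :: "nat \<Rightarrow> (nat \<Rightarrow> nat \<Rightarrow> nat \<Rightarrow> nat \<Rightarrow> real) \<Rightarrow> (nat \<Rightarrow> nat \<Rightarrow> real) \<Rightarrow> nat \<Rightarrow> nat \<Rightarrow> real" where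
  "Rring n R h i j =
     (if i < n \<and> j < n then
        Rbar n R h i j - (if i = j then (\<Sum>k<n. Rbar n R h k k) / real n else 0)
      else 0)"

definition sorted_eigenvalues_S20 ::
  "nat \<Rightarrow> ((nat \<Rightarrow> nat \<Rightarrow> real) \<Rightarrow> nat \<Rightarrow> nat \<Rightarrow> real) \<Rightarrow> (nat \<Rightarrow> real) \<Rightarrow> bool" where
  "sorted_eigenvalues_S20 n T lam \<longleftrightarrow>
     (\<forall>a b. a \<le> b \<and> b < dimS20 n \<longrightarrow> lam a \<le> lam b) \<and>
     (\<exists>E. (\<forall>a<dimS20 n. E a \<in> S20 n \<and> T (E a) = (\<lambda>i j. lam a * E a i j)) \<and>
          (\<forall>a<dimS20 n. \<forall>b<dimS20 n. tensor_inner n (E a) (E b) = (if a = b then 1 else 0)))"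

definition eig_avg :: "nat \<Rightarrow> (nat \<Rightarrow> real) \<Rightarrow> real" where
  "eig_avg N lam = (\<Sum>a<N. lam a) / real N"

text \<open>lambda_1 + ... + lambda_alpha (0-based indexing of lam).\<close>
definition eig_partial_sum :: "(nat \<Rightarrow> real) \<Rightarrow> real \<Rightarrow> real" where
  "eig_partial_sum lam \<alpha> =
     (\<Sum>a<nat \<lfloor>\<alpha>\<rfloor>. lam a) + (\<alpha> - of_int \<lfloor>\<alpha>\<rfloor>) * lam (nat \<lfloor>\<alpha>\<rfloor>)"

definition in_cone :: "nat \<Rightarrow> (nat \<Rightarrow> real) \<Rightarrow> real \<Rightarrow> real \<Rightarrow> bool" where
  "in_cone N lam \<alpha> \<theta> \<longleftrightarrow> eig_partial_sum lam \<alpha> / \<alpha> \<ge> - \<theta> * eig_avg N lam"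

end

theory Submission
  imports Defs "HOL-Library.Function_Algebras"
begin

lemma sum_fun_apply_gen: "(\<Sum>a\<in>A. f a) x = (\<Sum>a\<in>A. f a x)"
  by (induction A rule: infinite_finite_induct) auto

lemma sd1[simp]: "finite A \<Longrightarrow> (\<Sum>a\<in>A. (if a = b then 1 else 0) * f a) = (if b \<in> A then f b else (0::real))"
  by (simp add: if_distrib[of "\<lambda>x. x * _"] cong: if_cong)
lemma sd2[simp]: "finite A \<Longrightarrow> (\<Sum>a\<in>A. f a * (if a = b then 1 else 0)) = (if b \<in> A then f b else (0::real))"
  by (simp add: if_distrib[of "\<lambda>x. _ * x"] cong: if_cong)
lemma sd3[simp]: "finite A \<Longrightarrow> (\<Sum>a\<in>A. (if b = a then 1 else 0) * f a) = (if b \<in> A then f b else (0::real))"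
  by (simp add: if_distrib[of "\<lambda>x. x * _"] cong: if_cong)
lemma sd4[simp]: "finite A \<Longrightarrow> (\<Sum>a\<in>A. f a * (if b = a then 1 else 0)) = (if b \<in> A then f b else (0::real))"
  by (simp add: if_distrib[of "\<lambda>x. _ * x"] cong: if_cong)

lemma completeness_generic:
  fixes scale :: "real \<Rightarrow> 'v::ab_group_add \<Rightarrow> 'v" and ip :: "'v \<Rightarrow> 'v \<Rightarrow> real"
    and E :: "nat \<Rightarrow> 'v" and V B :: "'v set"
  assumes vs: "vector_space scale"
    and ip_add: "\<And>x y z. ip (x + y) z = ip x z + ip y z"
    and ip_scale: "\<And>c x z. ip (scale c x) z = c * ip x z"
    and ip_sym: "\<And>x y. ip x y = ip y x"
    and ip_pos: "\<And>x. x \<in> V \<Longrightarrow> ip x x = 0 \<Longrightarrow> x = 0"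
    and V_diff: "\<And>x y. x \<in> V \<Longrightarrow> y \<in> V \<Longrightarrow> x - y \<in> V"
    and V_scale: "\<And>c x. x \<in> V \<Longrightarrow> scale c x \<in> V"
    and V_sum: "\<And>f (A::nat set). finite A \<Longrightarrow> (\<And>a. a \<in> A \<Longrightarrow> f a \<in> V) \<Longrightarrow> sum f A \<in> V"
    and span: "V \<subseteq> module.span scale B" and finB: "finite B" and cardB: "card B \<le> m"
    and EV: "\<And>a. a < m \<Longrightarrow> E a \<in> V"
    and Eon: "\<And>a b. a < m \<Longrightarrow> b < m \<Longrightarrow> ip (E a) (E b) = (if a = b then 1 else 0)"
    and X: "X \<in> V"
  shows "X = (\<Sum>a<m. scale (ip X (E a)) (E a))"
proof (rule ccontr)
  interpret vector_space scale by (rule vs)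
  have ip_zero: "ip 0 z = 0" for z using ip_add[of 0 0 z] by simp
  have ip_diff: "ip (x - y) z = ip x z - ip y z" for x y z
    using ip_add[of "x - y" y z] by simp
  have ip_sum: "ip (sum f A) z = (\<Sum>a\<in>A. ip (f a) z)" for f and A :: "nat set" and z
    by (induction A rule: infinite_finite_induct) (auto simp: ip_zero ip_add)
  have ip_sum': "ip (sum f A) z = (\<Sum>a\<in>A. ip (f a) z)" for f and A :: "'v set" and z
    by (induction A rule: infinite_finite_induct) (auto simp: ip_zero ip_add)
  define Y where "Y = X - (\<Sum>a<m. scale (ip X (E a)) (E a))"
  assume "X \<noteq> (\<Sum>a<m. scale (ip X (E a)) (E a))"
  then have Y0: "Y \<noteq> 0" by (simp add: Y_def)
  have "(\<Sum>a<m. scale (ip X (E a)) (E a)) \<in> V" by (rule V_sum) (auto intro: V_scale EV)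
  then have YV: "Y \<in> V" unfolding Y_def using X by (intro V_diff)
  have YY: "ip Y Y \<noteq> 0" using ip_pos[OF YV] Y0 by blast
  have YE: "ip Y (E b) = 0" if "b < m" for b
  proof -
    have "ip (\<Sum>a<m. scale (ip X (E a)) (E a)) (E b) = (\<Sum>a<m. ip X (E a) * (if a = b then 1 else 0))"
      using that by (simp add: ip_sum ip_scale Eon)
    also have "\<dots> = ip X (E b)" using that by (simp add: if_distrib cong: if_cong)
    finally show ?thesis by (simp add: Y_def ip_diff)
  qed
  define S where "S = insert Y (E ` {..<m})"
  have injE: "inj_on E {..<m}"
    by (rule inj_onI) (metis Eon lessThan_iff zero_neq_one)
  have YnE: "Y \<notin> E ` {..<m}"
  proof
    assume "Y \<in> E ` {..<m}"
    then obtain b where "b < m" "Y = E b" by auto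
    then show False using YE[of b] Eon[of b b] by simp
  qed
  have cardS: "card S = Suc m" unfolding S_def using YnE injE by (simp add: card_image)
  have orth: "ip u v = 0" if "u \<in> S" "v \<in> S" "u \<noteq> v" for u v
    using that YE Eon ip_sym unfolding S_def by auto
  have nz: "ip u u \<noteq> 0" if "u \<in> S" for u
    using that YY Eon unfolding S_def by auto
  have indep: "\<not> dependent S"
  proof
    assume "dependent S"
    then obtain t u v0 where t: "finite t" "t \<subseteq> S" "(\<Sum>v\<in>t. scale (u v) v) = 0" and v0: "v0 \<in> t" "u v0 \<noteq> 0"
      unfolding dependent_explicit by blast
    have "0 = ip (\<Sum>v\<in>t. scale (u v) v) v0" using t(3) ip_zero by simp
    also have "\<dots> = (\<Sum>v\<in>t. u v * ip v v0)" by (simp add: ip_sum' ip_scale)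
    also have "\<dots> = u v0 * ip v0 v0 + (\<Sum>v\<in>t-{v0}. u v * ip v v0)"
      by (simp add: sum.remove[OF t(1) v0(1)])
    also have "(\<Sum>v\<in>t-{v0}. u v * ip v v0) = 0"
      by (rule sum.neutral) (use orth t(2) v0 in auto)
    finally show False using v0 nz[of v0] t(2) by auto
  qed
  have "S \<subseteq> span B" using span EV YV unfolding S_def by auto
  from independent_span_bound[OF finB indep this] cardS cardB show False by simp
qed


lemma vs_scale1: "vector_space (\<lambda>(c::real) (v::nat \<Rightarrow> real). \<lambda>a. c * v a)"
  by unfold_locales (auto simp: fun_eq_iff algebra_simps)

lemma col_orth:
  assumes "orthonormal_basis n e" "a < n" "b < n"
  shows "(\<Sum>k<n. e k a * e k b) = (if a = b then 1 else 0)"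
proof -
  let ?scale = "\<lambda>(c::real) (v::nat \<Rightarrow> real). \<lambda>a. c * v a"
  let ?ip = "\<lambda>x y. \<Sum>a<n. x a * y a"
  let ?V = "{v::nat\<Rightarrow>real. \<forall>a. n \<le> a \<longrightarrow> v a = 0}"
  let ?d = "\<lambda>k::nat. \<lambda>a::nat. if a = k then (1::real) else 0"
  let ?B = "?d ` {..<n}"
  let ?E = "\<lambda>k a. if a < n then e k a else 0"
  interpret vector_space ?scale by (rule vs_scale1)
  have span: "?V \<subseteq> span ?B"
  proof
    fix v assume v: "v \<in> ?V"
    have "v = (\<Sum>k<n. ?scale (v k) (?d k))"
    proof
      fix a
      show "v a = (\<Sum>k<n. ?scale (v k) (?d k)) a"
        using v by (auto simp: sum_fun_apply_gen if_distrib cong: if_cong)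
    qed
    also have "\<dots> \<in> span ?B"
      by (intro span_sum span_scale span_base) auto
    finally show "v \<in> span ?B" .
  qed
  have eq: "?d b = (\<Sum>k<n. ?scale (?ip (?d b) (?E k)) (?E k))"
  proof (rule completeness_generic[OF vs_scale1, where V = ?V and B = ?B])
    show "?ip x x = 0 \<Longrightarrow> x = 0" if "x \<in> ?V" for x
    proof -
      assume "?ip x x = 0"
      then have "\<forall>a\<in>{..<n}. x a * x a = 0"
        by (subst (asm) sum_nonneg_eq_0_iff) auto
      then show "x = 0" using that by (auto simp: fun_eq_iff) (metis lessThan_iff not_le)
    qed
    show "card ?B \<le> n" using card_image_le[of "{..<n}" ?d] by simp
    show "?ip (?E a) (?E c) = (if a = c then 1 else 0)" if "a < n" "c < n" for a c
      using assms(1) that unfolding orthonormal_basis_def by auto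
  qed (use assms span in \<open>auto simp: sum.distrib algebra_simps sum_distrib_left sum_fun_apply_gen\<close>)
  have "?d b a = (\<Sum>k<n. ?ip (?d b) (?E k) * ?E k a)"
    using fun_cong[OF eq, of a] by (simp add: sum_fun_apply_gen)
  also have "\<dots> = (\<Sum>k<n. e k b * e k a)"
    using assms by (intro sum.cong refl) simp
  finally show ?thesis by (auto simp: mult.commute)
qed


definition sc2 :: "real \<Rightarrow> (nat \<Rightarrow> nat \<Rightarrow> real) \<Rightarrow> (nat \<Rightarrow> nat \<Rightarrow> real)" where
  "sc2 c h = (\<lambda>i j. c * h i j)"

lemma vs_sc2: "vector_space sc2"
  by unfold_locales (auto simp: fun_eq_iff algebra_simps sc2_def)

lemma card_pairs: "card {(a,b). a < b \<and> b < (n::nat)} = n * (n - 1) div 2"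
proof (induction n)
  case 0 then show ?case by simp
next
  case (Suc n)
  have eq: "{(a,b). a < b \<and> b < Suc n} = {(a,b). a < b \<and> b < n} \<union> (\<lambda>a. (a,n)) ` {..<n}"
    by auto
  have fin: "finite {(a,b). a < b \<and> b < (n::nat)}"
    by (rule finite_subset[of _ "{..<n} \<times> {..<n}"]) auto
  have "card {(a,b). a < b \<and> b < Suc n} = card {(a,b). a < b \<and> b < n} + card ((\<lambda>a. (a,n)) ` {..<n})"
    unfolding eq by (rule card_Un_disjoint) (use fin in auto)
  also have "card ((\<lambda>a. (a,n)) ` {..<n}) = n" by (simp add: card_image inj_on_def)
  finally show ?case using Suc.IH
    by (cases n) (auto simp: algebra_simps)
qed

lemma S20_span:
  assumes "n \<ge> 1"
  shows "\<exists>B. finite B \<and> card B \<le> dimS20 n \<and> S20 n \<subseteq> module.span sc2 B"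
proof -
  interpret vector_space sc2 by (rule vs_sc2)
  define I1 where "I1 = {(a,b). a < b \<and> b < (n::nat)}"
  define S where "S = (\<lambda>(a,b) (i::nat) (j::nat). (if i = a \<and> j = b then 1 else 0) + (if i = b \<and> j = a then 1 else (0::real)))"
  define D where "D = (\<lambda>a (i::nat) (j::nat). (if i = a \<and> j = a then 1 else 0) - (if i = n - 1 \<and> j = n - 1 then 1 else (0::real)))"
  define B where "B = S ` I1 \<union> D ` {..<n-1}"
  have finI1: "finite I1" unfolding I1_def
    by (rule finite_subset[of _ "{..<n} \<times> {..<n}"]) auto
  have "card B \<le> card (S ` I1) + card (D ` {..<n-1})" unfolding B_def by (rule card_Un_le)
  also have "\<dots> \<le> card I1 + (n - 1)"
    using card_image_le[OF finI1, of S] card_image_le[of "{..<n-1}" D] by simp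
  also have "card I1 + (n - 1) = dimS20 n"
  proof -
    obtain m where m: "n = Suc m" using assms by (cases n) auto
    have h1: "card I1 = n * (n - 1) div 2" unfolding I1_def by (rule card_pairs)
    have h2: "(n - 1) * (n + 2) = n * (n - 1) + 2 * (n - 1)" unfolding m by (simp add: algebra_simps)
    have h3: "(n * (n - 1) + 2 * (n - 1)) div 2 = n * (n - 1) div 2 + (n - 1)" by simp
    show ?thesis unfolding dimS20_def h1 h2 h3 by (rule refl)
  qed
  finally have cardB: "card B \<le> dimS20 n" .
  have "S20 n \<subseteq> span B"
  proof
    fix X assume X: "X \<in> S20 n"
    have sym: "X i j = X j i" for i j using X by (auto simp: S20_def)
    have out: "n \<le> i \<or> n \<le> j \<Longrightarrow> X i j = 0" for i j using X by (auto simp: S20_def)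
    have tr: "(\<Sum>i<n. X i i) = 0" using X by (auto simp: S20_def)
    have tr': "(\<Sum>a<n-1. X a a) = - X (n-1) (n-1)"
    proof -
      have "{..<n} = insert (n-1) {..<n-1}" using assms by auto
      then show ?thesis using tr by simp
    qed
    have "X = (\<Sum>x\<in>I1. sc2 (X (fst x) (snd x)) (S x)) + (\<Sum>a<n-1. sc2 (X a a) (D a))"
    proof (intro ext)
      fix i j
      have e1: "(\<Sum>x\<in>I1. sc2 (X (fst x) (snd x)) (S x)) i j
          = (\<Sum>x\<in>I1. (if x = (i,j) then X i j else 0) + (if x = (j,i) then X j i else 0))"
        unfolding sum_fun_apply_gen
      proof (intro sum.cong refl)
        fix x assume "x \<in> I1"
        obtain a b where x: "x = (a,b)" by (cases x)
        show "sc2 (X (fst x) (snd x)) (S x) i j = (if x = (i,j) then X i j else 0) + (if x = (j,i) then X j i else 0)"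
          unfolding x sc2_def S_def by (cases "i = a"; cases "j = b"; cases "i = b"; cases "j = a") auto
      qed
      also have "\<dots> = (if (i,j) \<in> I1 then X i j else 0) + (if (j,i) \<in> I1 then X j i else 0)"
        unfolding sum.distrib using finI1 by (simp add: sum.delta)
      finally have e1': "(\<Sum>x\<in>I1. sc2 (X (fst x) (snd x)) (S x)) i j = 
         (if (i,j) \<in> I1 then X i j else 0) + (if (j,i) \<in> I1 then X j i else 0)" .
      have e2: "(\<Sum>a<n-1. sc2 (X a a) (D a)) i j
          = (\<Sum>a<n-1. (if a = i then (if i = j then X i i else 0) else 0) - (if i = n - 1 \<and> j = n - 1 then X a a else 0))"
        unfolding sum_fun_apply_gen by (intro sum.cong refl) (auto simp: sc2_def D_def)
      also have "\<dots> = (if i < n - 1 then (if i = j then X i i else 0) else 0) - (if i = n - 1 \<and> j = n - 1 then (\<Sum>a<n-1. X a a) else 0)"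
        unfolding sum_subtractf by (cases "i = n - 1 \<and> j = n - 1") (auto simp: sum.delta')
      finally have e2': "(\<Sum>a<n-1. sc2 (X a a) (D a)) i j = (if i < n - 1 then (if i = j then X i i else 0) else 0) - (if i = n - 1 \<and> j = n - 1 then (\<Sum>a<n-1. X a a) else 0)" .
      show "X i j = ((\<Sum>x\<in>I1. sc2 (X (fst x) (snd x)) (S x)) + (\<Sum>a<n-1. sc2 (X a a) (D a))) i j"
        unfolding plus_fun_apply e1' e2' tr'
      proof (cases "i < n \<and> j < n")
        case True
        consider "i < j" | "j < i" | "i = j" "i < n - 1" | "i = j" "i = n - 1" using True by linarith
        then show "X i j = (if (i,j) \<in> I1 then X i j else 0) + (if (j,i) \<in> I1 then X j i else 0) +
           ((if i < n - 1 then (if i = j then X i i else 0) else 0) - (if i = n - 1 \<and> j = n - 1 then - X (n - 1) (n - 1) else 0))"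
          by cases (use True sym in \<open>auto simp: I1_def\<close>)
      next
        case False
        then show "X i j = (if (i,j) \<in> I1 then X i j else 0) + (if (j,i) \<in> I1 then X j i else 0) +
           ((if i < n - 1 then (if i = j then X i i else 0) else 0) - (if i = n - 1 \<and> j = n - 1 then - X (n - 1) (n - 1) else 0))"
          using out[of i j] assms by (auto simp: I1_def)
      qed
    qed
    also have "\<dots> \<in> span B"
      unfolding B_def by (intro span_add span_sum span_scale span_base) auto
    finally show "X \<in> span B" .
  qed
  then show ?thesis using cardB finI1 B_def by blast
qed


lemma ti_add: "tensor_inner n (x + y) z = tensor_inner n x z + tensor_inner n y z"
  by (simp add: tensor_inner_def algebra_simps sum.distrib)
lemma ti_sc2: "tensor_inner n (sc2 c x) z = c * tensor_inner n x z"
  by (simp add: tensor_inner_def sc2_def sum_distrib_left algebra_simps)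
lemma ti_sym: "tensor_inner n x y = tensor_inner n y x"
  by (simp add: tensor_inner_def algebra_simps)
lemma ti_zero: "tensor_inner n 0 z = 0"
  by (simp add: tensor_inner_def)
lemma ti_sum: "tensor_inner n (sum f A) z = (\<Sum>a\<in>A. tensor_inner n (f a) z)"
proof -
  have "tensor_inner n (sum f A) z = (\<Sum>i<n. \<Sum>j<n. \<Sum>a\<in>A. f a i j * z i j)"
    unfolding tensor_inner_def sum_fun_apply_gen sum_distrib_right ..
  also have "\<dots> = (\<Sum>i<n. \<Sum>a\<in>A. \<Sum>j<n. f a i j * z i j)"
    by (rule sum.cong[OF refl], rule sum.swap)
  also have "\<dots> = (\<Sum>a\<in>A. \<Sum>i<n. \<Sum>j<n. f a i j * z i j)"
    by (rule sum.swap)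
  finally show ?thesis unfolding tensor_inner_def .
qed

lemma parseval_S20:
  assumes n: "n \<ge> 1"
    and EV: "\<And>a. a < dimS20 n \<Longrightarrow> E a \<in> S20 n"
    and Eon: "\<And>a b. a < dimS20 n \<Longrightarrow> b < dimS20 n \<Longrightarrow> tensor_inner n (E a) (E b) = (if a = b then 1 else 0)"
    and X: "X \<in> S20 n" and Y: "Y \<in> S20 n"
  shows "(\<Sum>a<dimS20 n. tensor_inner n X (E a) * tensor_inner n Y (E a)) = tensor_inner n X Y"
proof -
  obtain B where B: "finite B" "card B \<le> dimS20 n" "S20 n \<subseteq> module.span sc2 B"
    using S20_span[OF n] by blast
  have eq: "X = (\<Sum>a<dimS20 n. sc2 (tensor_inner n X (E a)) (E a))"
  proof (rule completeness_generic[OF vs_sc2, where V = "S20 n" and B = B and ip = "tensor_inner n"])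
    show "x = 0" if "x \<in> S20 n" "tensor_inner n x x = 0" for x
    proof -
      have "\<forall>i\<in>{..<n}. (\<Sum>j<n. x i j * x i j) = 0"
        using that(2) unfolding tensor_inner_def
        by (subst (asm) sum_nonneg_eq_0_iff) (auto intro: sum_nonneg)
      then have "\<forall>i<n. \<forall>j\<in>{..<n}. x i j * x i j = 0"
        by (auto simp: sum_nonneg_eq_0_iff)
      then show "x = 0" using that(1) unfolding S20_def
        by (auto simp: fun_eq_iff) (metis lessThan_iff not_le)
    qed
    show "x - y \<in> S20 n" if "x \<in> S20 n" "y \<in> S20 n" for x y
      using that by (auto simp: S20_def sum_subtractf)
    show "sc2 c x \<in> S20 n" if "x \<in> S20 n" for c x
      using that by (auto simp: S20_def sc2_def sum_distrib_left[symmetric])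
    show "sum f A \<in> S20 n" if "finite A" "\<And>a. a \<in> A \<Longrightarrow> f a \<in> S20 n" for f and A :: "nat set"
    proof -
      have "\<forall>a\<in>A. (\<forall>i j. f a i j = f a j i) \<and> (\<forall>i j. (n \<le> i \<or> n \<le> j) \<longrightarrow> f a i j = 0) \<and> (\<Sum>i<n. f a i i) = 0"
        using that(2) by (auto simp: S20_def)
      have "(\<Sum>i<n. \<Sum>a\<in>A. f a i i) = (\<Sum>a\<in>A. \<Sum>i<n. f a i i)" by (rule sum.swap)
      also have "\<dots> = 0" using that(2) by (auto simp: S20_def intro!: sum.neutral)
      finally have "(\<Sum>i<n. \<Sum>a\<in>A. f a i i) = 0" .
      with that(2) show ?thesis
        by (auto simp: S20_def sum_fun_apply_gen intro!: sum.neutral sum.cong)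
    qed
  qed (use B X EV Eon in \<open>auto simp: ti_add ti_sc2 intro: ti_sym\<close>)
  have "tensor_inner n X Y = (\<Sum>a<dimS20 n. tensor_inner n X (E a) * tensor_inner n (E a) Y)"
    by (subst eq) (simp add: ti_sum ti_sc2)
  then show ?thesis by (simp add: ti_sym)
qed

definition restr :: "nat \<Rightarrow> (nat \<Rightarrow> nat \<Rightarrow> real) \<Rightarrow> nat \<Rightarrow> nat \<Rightarrow> real" where
  "restr n X = (\<lambda>i j. if i < n \<and> j < n then X i j else 0)"

definition symtl :: "nat \<Rightarrow> (nat \<Rightarrow> nat \<Rightarrow> real) \<Rightarrow> bool" where
  "symtl n X \<longleftrightarrow> (\<forall>i<n. \<forall>j<n. X i j = X j i) \<and> (\<Sum>i<n. X i i) = 0"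

lemma restr_S20: "symtl n X \<Longrightarrow> restr n X \<in> S20 n"
  by (auto simp: S20_def symtl_def restr_def)

lemma ti_restr: "tensor_inner n (restr n X) Z = tensor_inner n X Z"
  by (simp add: tensor_inner_def restr_def)

lemma parseval:
  assumes n: "n \<ge> 1"
    and EV: "\<And>a. a < dimS20 n \<Longrightarrow> E a \<in> S20 n"
    and Eon: "\<And>a b. a < dimS20 n \<Longrightarrow> b < dimS20 n \<Longrightarrow> tensor_inner n (E a) (E b) = (if a = b then 1 else 0)"
    and X: "symtl n X" and Y: "symtl n Y"
  shows "(\<Sum>a<dimS20 n. tensor_inner n X (E a) * tensor_inner n Y (E a)) = tensor_inner n X Y"
proof -
  have "tensor_inner n X (restr n Y) = tensor_inner n X Y"
    using ti_restr[of n Y X] ti_sym[of n X] by metis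
  moreover have "\<And>a. tensor_inner n (restr n Y) (E a) = tensor_inner n Y (E a)" by (rule ti_restr)
  ultimately show ?thesis
    using parseval_S20[OF n EV Eon restr_S20[OF X] restr_S20[OF Y]] by (simp add: ti_restr)
qed


lemma swap_pairs: "(\<Sum>a\<in>A. \<Sum>b\<in>B. \<Sum>c\<in>C. \<Sum>d\<in>D. f a b c d) = (\<Sum>c\<in>C. \<Sum>d\<in>D. \<Sum>a\<in>A. \<Sum>b\<in>B. f a b c d)"
proof -
  have "(\<Sum>a\<in>A. \<Sum>b\<in>B. \<Sum>c\<in>C. \<Sum>d\<in>D. f a b c d) = (\<Sum>a\<in>A. \<Sum>c\<in>C. \<Sum>b\<in>B. \<Sum>d\<in>D. f a b c d)"
    by (rule sum.cong[OF refl], rule sum.swap)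
  also have "\<dots> = (\<Sum>c\<in>C. \<Sum>a\<in>A. \<Sum>b\<in>B. \<Sum>d\<in>D. f a b c d)" by (rule sum.swap)
  also have "\<dots> = (\<Sum>c\<in>C. \<Sum>a\<in>A. \<Sum>d\<in>D. \<Sum>b\<in>B. f a b c d)"
    by (rule sum.cong[OF refl], rule sum.cong[OF refl], rule sum.swap)
  also have "\<dots> = (\<Sum>c\<in>C. \<Sum>d\<in>D. \<Sum>a\<in>A. \<Sum>b\<in>B. f a b c d)"
    by (rule sum.cong[OF refl], rule sum.swap)
  finally show ?thesis .
qed

lemma sum4_cong: "(\<And>a b c d. a < n \<Longrightarrow> b < n \<Longrightarrow> c < n \<Longrightarrow> d < n \<Longrightarrow> f a b c d = g a b c d) \<Longrightarrow>
  (\<Sum>a<n. \<Sum>b<n. \<Sum>c<n. \<Sum>d<n. f a b c d) = (\<Sum>a<(n::nat). \<Sum>b<n. \<Sum>c<n. \<Sum>d<n. g a b c d)"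
  by (intro sum.cong refl) auto

context
  fixes n :: nat and R :: "nat \<Rightarrow> nat \<Rightarrow> nat \<Rightarrow> nat \<Rightarrow> real"
  assumes acR: "alg_curv_tensor n R"
begin

lemma R_anti1: "a < n \<Longrightarrow> b < n \<Longrightarrow> c < n \<Longrightarrow> d < n \<Longrightarrow> R b a c d = - R a b c d"
  using acR unfolding alg_curv_tensor_def by metis
lemma R_anti2: "a < n \<Longrightarrow> b < n \<Longrightarrow> c < n \<Longrightarrow> d < n \<Longrightarrow> R a b d c = - R a b c d"
  using acR unfolding alg_curv_tensor_def by (metis minus_equation_iff)
lemma R_pair: "a < n \<Longrightarrow> b < n \<Longrightarrow> c < n \<Longrightarrow> d < n \<Longrightarrow> R c d a b = R a b c d"
  using acR unfolding alg_curv_tensor_def by metis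

lemma T_anti1: "tensor4 n R y x z w = - tensor4 n R x y z w"
proof -
  have "tensor4 n R y x z w = (\<Sum>a<n. \<Sum>b<n. \<Sum>c<n. \<Sum>d<n. R b a c d * y b * x a * z c * w d)"
    unfolding tensor4_def by (rule sum.swap)
  also have "\<dots> = (\<Sum>a<n. \<Sum>b<n. \<Sum>c<n. \<Sum>d<n. - (R a b c d * x a * y b * z c * w d))"
    by (rule sum4_cong) (subst R_anti1, auto)
  finally show ?thesis unfolding tensor4_def by (simp add: sum_negf)
qed

lemma T_anti2: "tensor4 n R x y w z = - tensor4 n R x y z w"
proof -
  have "tensor4 n R x y w z = (\<Sum>a<n. \<Sum>b<n. \<Sum>c<n. \<Sum>d<n. R a b d c * x a * y b * w d * z c)"
    unfolding tensor4_def by (intro sum.cong refl sum.swap)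
  also have "\<dots> = (\<Sum>a<n. \<Sum>b<n. \<Sum>c<n. \<Sum>d<n. - (R a b c d * x a * y b * z c * w d))"
    by (rule sum4_cong) (subst R_anti2, auto)
  finally show ?thesis unfolding tensor4_def by (simp add: sum_negf)
qed

lemma T_pair: "tensor4 n R z w x y = tensor4 n R x y z w"
proof -
  have "tensor4 n R z w x y = (\<Sum>c<n. \<Sum>d<n. \<Sum>a<n. \<Sum>b<n. R c d a b * z c * w d * x a * y b)"
    unfolding tensor4_def by (rule refl)
  also have "\<dots> = (\<Sum>a<n. \<Sum>b<n. \<Sum>c<n. \<Sum>d<n. R c d a b * z c * w d * x a * y b)"
    by (rule swap_pairs[symmetric])
  also have "\<dots> = (\<Sum>a<n. \<Sum>b<n. \<Sum>c<n. \<Sum>d<n. R a b c d * x a * y b * z c * w d)"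
    by (rule sum4_cong) (subst R_pair, auto)
  finally show ?thesis unfolding tensor4_def .
qed

lemma T_anti12: "tensor4 n R y x w z = tensor4 n R x y z w"
proof -
  have "tensor4 n R y x w z = - tensor4 n R x y w z" by (rule T_anti1)
  also have "tensor4 n R x y w z = - tensor4 n R x y z w" by (rule T_anti2)
  finally show ?thesis by simp
qed

lemma T_xx: "tensor4 n R x x z w = 0"
proof -
  have "tensor4 n R x x z w = - tensor4 n R x x z w" by (rule T_anti1)
  then show ?thesis by linarith
qed

lemma T_zz: "tensor4 n R x y z z = 0"
proof -
  have "tensor4 n R x y z z = - tensor4 n R x y z z" by (rule T_anti2)
  then show ?thesis by linarith
qed

end

lemma sum_move3: "(\<Sum>j\<in>J. \<Sum>a\<in>A. \<Sum>b\<in>B. f j a b) = (\<Sum>a\<in>A. \<Sum>b\<in>B. \<Sum>j\<in>J. f j a b)"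
proof -
  have "(\<Sum>j\<in>J. \<Sum>a\<in>A. \<Sum>b\<in>B. f j a b) = (\<Sum>a\<in>A. \<Sum>j\<in>J. \<Sum>b\<in>B. f j a b)" by (rule sum.swap)
  also have "\<dots> = (\<Sum>a\<in>A. \<Sum>b\<in>B. \<Sum>j\<in>J. f j a b)" by (rule sum.cong[OF refl], rule sum.swap)
  finally show ?thesis .
qed

lemma sum_move5: "(\<Sum>k\<in>K. \<Sum>a\<in>A. \<Sum>b\<in>B. \<Sum>c\<in>C. \<Sum>d\<in>D. f k a b c d) = (\<Sum>a\<in>A. \<Sum>b\<in>B. \<Sum>c\<in>C. \<Sum>d\<in>D. \<Sum>k\<in>K. f k a b c d)"
proof -
  have "(\<Sum>k\<in>K. \<Sum>a\<in>A. \<Sum>b\<in>B. \<Sum>c\<in>C. \<Sum>d\<in>D. f k a b c d) = (\<Sum>a\<in>A. \<Sum>k\<in>K. \<Sum>b\<in>B. \<Sum>c\<in>C. \<Sum>d\<in>D. f k a b c d)" by (rule sum.swap)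
  also have "\<dots> = (\<Sum>a\<in>A. \<Sum>b\<in>B. \<Sum>c\<in>C. \<Sum>k\<in>K. \<Sum>d\<in>D. f k a b c d)" by (rule sum.cong[OF refl], rule sum_move3)
  also have "\<dots> = (\<Sum>a\<in>A. \<Sum>b\<in>B. \<Sum>c\<in>C. \<Sum>d\<in>D. \<Sum>k\<in>K. f k a b c d)"
    by (intro sum.cong refl sum.swap)
  finally show ?thesis .
qed

definition op :: "(nat \<Rightarrow> real) \<Rightarrow> (nat \<Rightarrow> real) \<Rightarrow> nat \<Rightarrow> nat \<Rightarrow> real" where
  "op x y = (\<lambda>i j. x i * y j)"
definition dl :: "nat \<Rightarrow> nat \<Rightarrow> real" where
  "dl = (\<lambda>i j. if i = j then 1 else 0)"
definition uv :: "nat \<Rightarrow> nat \<Rightarrow> real" where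
  "uv k = (\<lambda>a. if a = k then 1 else 0)"
definition Qf :: "nat \<Rightarrow> (nat \<Rightarrow> nat \<Rightarrow> nat \<Rightarrow> nat \<Rightarrow> real) \<Rightarrow> (nat \<Rightarrow> nat \<Rightarrow> real) \<Rightarrow> (nat \<Rightarrow> nat \<Rightarrow> real) \<Rightarrow> real" where
  "Qf n R h k = tensor_inner n (Rbar n R h) k"

lemma Qf_expand: "Qf n R h k = (\<Sum>i<n. \<Sum>j<n. \<Sum>a<n. \<Sum>b<n. R i a b j * h a b * k i j)"
  unfolding Qf_def tensor_inner_def Rbar_def by (simp add: sum_distrib_right)

lemma Qf_cong: "(\<And>i j. i < n \<Longrightarrow> j < n \<Longrightarrow> h i j = h' i j) \<Longrightarrow> (\<And>i j. i < n \<Longrightarrow> j < n \<Longrightarrow> k i j = k' i j) \<Longrightarrow> Qf n R h k = Qf n R h' k'"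
  unfolding Qf_expand by (intro sum.cong refl) auto

lemma Qf_lin_left: "Qf n R (\<lambda>i j. a * h1 i j + b * h2 i j) k = a * Qf n R h1 k + b * Qf n R h2 k"
  unfolding Qf_expand by (simp add: algebra_simps sum.distrib sum_distrib_left)
lemma Qf_lin_right: "Qf n R k (\<lambda>i j. a * h1 i j + b * h2 i j) = a * Qf n R k h1 + b * Qf n R k h2"
  unfolding Qf_expand by (simp add: algebra_simps sum.distrib sum_distrib_left)

lemma Qf_sum_left: "Qf n R (\<lambda>i j. \<Sum>m\<in>M. h m i j) k = (\<Sum>m\<in>M. Qf n R (h m) k)"
proof -
  have "Qf n R (\<lambda>i j. \<Sum>m\<in>M. h m i j) k = (\<Sum>i<n. \<Sum>j<n. \<Sum>a<n. \<Sum>b<n. \<Sum>m\<in>M. R i a b j * h m a b * k i j)"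
    unfolding Qf_expand by (simp add: sum_distrib_left sum_distrib_right)
  also have "\<dots> = (\<Sum>m\<in>M. \<Sum>i<n. \<Sum>j<n. \<Sum>a<n. \<Sum>b<n. R i a b j * h m a b * k i j)"
    by (rule sum_move5[symmetric])
  finally show ?thesis unfolding Qf_expand .
qed

lemma Qf_sum_right: "Qf n R k (\<lambda>i j. \<Sum>m\<in>M. h m i j) = (\<Sum>m\<in>M. Qf n R k (h m))"
proof -
  have "Qf n R k (\<lambda>i j. \<Sum>m\<in>M. h m i j) = (\<Sum>i<n. \<Sum>j<n. \<Sum>a<n. \<Sum>b<n. \<Sum>m\<in>M. R i a b j * k a b * h m i j)"
    unfolding Qf_expand by (simp add: sum_distrib_left sum_distrib_right)
  also have "\<dots> = (\<Sum>m\<in>M. \<Sum>i<n. \<Sum>j<n. \<Sum>a<n. \<Sum>b<n. R i a b j * k a b * h m i j)"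
    by (rule sum_move5[symmetric])
  finally show ?thesis unfolding Qf_expand .
qed

lemma ricci_frame:
  assumes "\<And>b d. b < n \<Longrightarrow> d < n \<Longrightarrow> (\<Sum>k<n. u k b * u k d) = (if b = d then 1 else 0)"
  shows "(\<Sum>k<n. tensor4 n R x (u k) y (u k)) = (\<Sum>a<n. \<Sum>b<n. \<Sum>c<n. R a b c b * x a * y c)"
proof -
  have "(\<Sum>k<n. tensor4 n R x (u k) y (u k)) = (\<Sum>a<n. \<Sum>b<n. \<Sum>c<n. \<Sum>d<n. \<Sum>k<n. R a b c d * x a * u k b * y c * u k d)"
    unfolding tensor4_def by (rule sum_move5)
  also have "\<dots> = (\<Sum>a<n. \<Sum>b<n. \<Sum>c<n. \<Sum>d<n. (R a b c d * x a * y c) * (\<Sum>k<n. u k b * u k d))"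
    by (simp add: sum_distrib_left algebra_simps)
  also have "\<dots> = (\<Sum>a<n. \<Sum>b<n. \<Sum>c<n. \<Sum>d<n. (R a b c d * x a * y c) * (if d = b then 1 else 0))"
    using assms by (intro sum.cong refl) auto
  also have "\<dots> = (\<Sum>a<n. \<Sum>b<n. \<Sum>c<n. R a b c b * x a * y c)"
    by simp
  finally show ?thesis .
qed

lemma uv_frame: "b < n \<Longrightarrow> d < n \<Longrightarrow> (\<Sum>k<n. uv k b * uv k d) = (if b = d then 1 else 0)"
  by (simp add: uv_def if_distrib[of "\<lambda>x. x * _"] cong: if_cong)

lemma ricci_std: "ricci n R x y = (\<Sum>a<n. \<Sum>b<n. \<Sum>c<n. R a b c b * x a * y c)"
proof -
  have "ricci n R x y = (\<Sum>k<n. tensor4 n R x (uv k) y (uv k))"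
    unfolding ricci_def uv_def by (simp add: eq_commute)
  also have "\<dots> = (\<Sum>a<n. \<Sum>b<n. \<Sum>c<n. R a b c b * x a * y c)" by (rule ricci_frame[OF uv_frame])
  finally show ?thesis .
qed

lemma ricci_basis: "orthonormal_basis n e \<Longrightarrow> ricci n R x y = (\<Sum>k<n. tensor4 n R x (e k) y (e k))"
  unfolding ricci_std by (rule ricci_frame[symmetric]) (rule col_orth)

lemma Qf_op: "Qf n R (op x y) (op z w) = tensor4 n R z x y w"
proof -
  have "Qf n R (op x y) (op z w) = (\<Sum>i<n. \<Sum>j<n. \<Sum>a<n. \<Sum>b<n. R i a b j * z i * x a * y b * w j)"
    unfolding Qf_expand op_def by (simp add: algebra_simps)
  also have "\<dots> = (\<Sum>i<n. \<Sum>a<n. \<Sum>b<n. \<Sum>j<n. R i a b j * z i * x a * y b * w j)"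
    by (rule sum.cong[OF refl], rule sum_move3)
  finally show ?thesis unfolding tensor4_def .
qed

context
  fixes n :: nat and R :: "nat \<Rightarrow> nat \<Rightarrow> nat \<Rightarrow> nat \<Rightarrow> real"
  assumes acR: "alg_curv_tensor n R"
begin

lemma Qf_sym: "Qf n R h k = Qf n R k h"
proof -
  have "Qf n R k h = (\<Sum>i<n. \<Sum>j<n. \<Sum>a<n. \<Sum>b<n. R i a b j * k a b * h i j)" by (rule Qf_expand)
  also have "\<dots> = (\<Sum>a<n. \<Sum>b<n. \<Sum>i<n. \<Sum>j<n. R i a b j * k a b * h i j)" by (rule swap_pairs)
  also have "\<dots> = (\<Sum>a<n. \<Sum>b<n. \<Sum>i<n. \<Sum>j<n. R a i j b * h i j * k a b)"
  proof (rule sum4_cong)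
    fix a b i j assume "a < n" "b < n" "i < n" "j < n"
    then have "R i a b j = R a i j b" using R_anti1[OF acR] R_anti2[OF acR] by (metis minus_minus)
    then show "R i a b j * k a b * h i j = R a i j b * h i j * k a b" by simp
  qed
  finally show ?thesis unfolding Qf_expand by simp
qed

lemma Qf_dl_op: "Qf n R dl (op z w) = - ricci n R z w"
proof -
  have "Qf n R dl (op z w) = (\<Sum>i<n. \<Sum>j<n. \<Sum>a<n. R i a a j * z i * w j)"
    unfolding Qf_expand op_def dl_def by (simp add: if_distrib[of "\<lambda>x. _ * x"] if_distrib[of "\<lambda>x. x * _"] mult.assoc cong: if_cong)
  also have "\<dots> = (\<Sum>i<n. \<Sum>a<n. \<Sum>j<n. - (R i a j a * z i * w j))"
  proof (rule sum.cong[OF refl])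
    fix i assume i: "i \<in> {..<n}"
    have "(\<Sum>j<n. \<Sum>a<n. R i a a j * z i * w j) = (\<Sum>a<n. \<Sum>j<n. R i a a j * z i * w j)" by (rule sum.swap)
    also have "\<dots> = (\<Sum>a<n. \<Sum>j<n. - (R i a j a * z i * w j))"
      using i by (intro sum.cong refl) (subst R_anti2[OF acR], auto)
    finally show "(\<Sum>j<n. \<Sum>a<n. R i a a j * z i * w j) = (\<Sum>a<n. \<Sum>j<n. - (R i a j a * z i * w j))" .
  qed
  finally show ?thesis unfolding ricci_std by (simp add: sum_negf)
qed

lemma Qf_op_dl: "Qf n R (op z w) dl = - ricci n R z w"
  using Qf_sym Qf_dl_op by simp

lemma ricci_sym: "ricci n R x y = ricci n R y x"
  unfolding ricci_def using T_pair[OF acR] by simp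

definition scal where "scal = (\<Sum>m<n. ricci n R (uv m) (uv m))"

lemma Qf_dl_dl: "Qf n R dl dl = - scal"
proof -
  have "Qf n R dl dl = Qf n R dl (\<lambda>i j. \<Sum>m<n. op (uv m) (uv m) i j)"
    by (rule Qf_cong) (auto simp: dl_def op_def uv_def if_distrib[of "\<lambda>x. x * _"] cong: if_cong)
  also have "\<dots> = (\<Sum>m<n. - ricci n R (uv m) (uv m))"
    by (simp add: Qf_sum_right Qf_dl_op)
  finally show ?thesis by (simp add: scal_def sum_negf)
qed

lemma scal_basis: "orthonormal_basis n e \<Longrightarrow> scal = (\<Sum>k<n. ricci n R (e k) (e k))"
proof -
  assume e: "orthonormal_basis n e"
  have "scal = (\<Sum>m<n. \<Sum>k<n. tensor4 n R (uv m) (e k) (uv m) (e k))"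
    unfolding scal_def using ricci_basis[OF e] by simp
  also have "\<dots> = (\<Sum>k<n. \<Sum>m<n. tensor4 n R (e k) (uv m) (e k) (uv m))"
    by (subst sum.swap) (intro sum.cong refl, rule T_anti12[OF acR])
  also have "\<dots> = (\<Sum>k<n. ricci n R (e k) (e k))"
    unfolding ricci_def uv_def by (simp add: eq_commute)
  finally show ?thesis .
qed

end

lemma ti_lin_right: "tensor_inner n k (\<lambda>i j. a * h1 i j + b * h2 i j) = a * tensor_inner n k h1 + b * tensor_inner n k h2"
  unfolding tensor_inner_def by (simp add: algebra_simps sum.distrib sum_distrib_left)
lemma ti_lin_left: "tensor_inner n (\<lambda>i j. a * h1 i j + b * h2 i j) k = a * tensor_inner n h1 k + b * tensor_inner n h2 k"
  unfolding tensor_inner_def by (simp add: algebra_simps sum.distrib sum_distrib_left)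

lemma ti_Rring: "(\<Sum>i<n. phi i i) = 0 \<Longrightarrow> tensor_inner n phi (Rring n R h) = tensor_inner n phi (Rbar n R h)"
proof -
  assume tr: "(\<Sum>i<n. phi i i) = 0"
  let ?t = "(\<Sum>k<n. Rbar n R h k k) / real n"
  have "tensor_inner n phi (Rring n R h) = (\<Sum>i<n. \<Sum>j<n. phi i j * Rbar n R h i j - (if i = j then phi i i * ?t else 0))"
    unfolding tensor_inner_def Rring_def by (intro sum.cong refl) (auto simp: algebra_simps)
  also have "\<dots> = tensor_inner n phi (Rbar n R h) - (\<Sum>i<n. phi i i) * ?t"
    unfolding tensor_inner_def sum_subtractf by (simp add: sum_distrib_right sum_divide_distrib)
  finally show ?thesis using tr by simp
qed

context
  fixes n :: nat and R :: "nat \<Rightarrow> nat \<Rightarrow> nat \<Rightarrow> nat \<Rightarrow> real"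
  assumes acR: "alg_curv_tensor n R"
begin

lemma Rbar_sym: "(\<And>i j. i < n \<Longrightarrow> j < n \<Longrightarrow> h i j = h j i) \<Longrightarrow> Rbar n R h j i = Rbar n R h i j"
proof -
  assume hs: "\<And>i j. i < n \<Longrightarrow> j < n \<Longrightarrow> h i j = h j i"
  show ?thesis
  proof (cases "i < n \<and> j < n")
    case True
    have "(\<Sum>a<n. \<Sum>b<n. R j a b i * h a b) = (\<Sum>a<n. \<Sum>b<n. R i b a j * h b a)"
    proof (intro sum.cong refl)
      fix a b assume "a \<in> {..<n}" "b \<in> {..<n}"
      then have "R j a b i = R i b a j" using True R_pair[OF acR] R_anti1[OF acR] R_anti2[OF acR]
        by (metis lessThan_iff minus_minus)
      then show "R j a b i * h a b = R i b a j * h b a" using hs \<open>a \<in> _\<close> \<open>b \<in> _\<close> by simp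
    qed
    also have "\<dots> = (\<Sum>b<n. \<Sum>a<n. R i b a j * h b a)" by (rule sum.swap)
    finally show ?thesis using True unfolding Rbar_def by simp
  qed (auto simp: Rbar_def)
qed

lemma Rring_symtl: "n \<ge> 1 \<Longrightarrow> symtl n phi \<Longrightarrow> symtl n (Rring n R phi)"
proof -
  assume n: "n \<ge> 1" and p: "symtl n phi"
  have sym: "Rring n R phi i j = Rring n R phi j i" if "i < n" "j < n" for i j
    using Rbar_sym[of phi i j] p that unfolding Rring_def symtl_def by auto
  have "(\<Sum>i<n. Rring n R phi i i) = (\<Sum>i<n. Rbar n R phi i i - (\<Sum>k<n. Rbar n R phi k k) / real n)"
    unfolding Rring_def by simp
  also have "\<dots> = 0" using n by (simp add: sum_subtractf)
  finally show ?thesis using sym unfolding symtl_def by auto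
qed

lemma frame_lemma:
  assumes n: "n \<ge> 1"
    and EV: "\<And>a. a < dimS20 n \<Longrightarrow> E a \<in> S20 n"
    and Eon: "\<And>a b. a < dimS20 n \<Longrightarrow> b < dimS20 n \<Longrightarrow> tensor_inner n (E a) (E b) = (if a = b then 1 else 0)"
    and eig: "\<And>a. a < dimS20 n \<Longrightarrow> Rring n R (E a) = (\<lambda>i j. lam a * E a i j)"
    and phi: "symtl n phi"
  shows "(\<Sum>a<dimS20 n. lam a * (tensor_inner n phi (E a))\<^sup>2) = Qf n R phi phi"
    and "(\<Sum>a<dimS20 n. (tensor_inner n phi (E a))\<^sup>2) = tensor_inner n phi phi"
proof -
  have trphi: "(\<Sum>i<n. phi i i) = 0" using phi by (simp add: symtl_def)
  have Es: "symtl n (E a)" if "a < dimS20 n" for a using EV[OF that] by (auto simp: S20_def symtl_def)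
  have key: "lam a * tensor_inner n phi (E a) = tensor_inner n (Rring n R phi) (E a)" if a: "a < dimS20 n" for a
  proof -
    have "lam a * tensor_inner n phi (E a) = tensor_inner n phi (Rring n R (E a))"
      unfolding eig[OF a] tensor_inner_def by (simp add: sum_distrib_left algebra_simps)
    also have "\<dots> = tensor_inner n phi (Rbar n R (E a))" by (rule ti_Rring[where phi=phi and n=n, OF trphi])
    also have "\<dots> = Qf n R (E a) phi" unfolding Qf_def by (rule ti_sym)
    also have "\<dots> = Qf n R phi (E a)" by (rule Qf_sym[OF acR])
    also have "\<dots> = tensor_inner n (E a) (Rbar n R phi)" unfolding Qf_def by (rule ti_sym)
    also have "\<dots> = tensor_inner n (E a) (Rring n R phi)"
      using Es[OF a] by (intro ti_Rring[symmetric]) (simp add: symtl_def)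
    also have "\<dots> = tensor_inner n (Rring n R phi) (E a)" by (rule ti_sym)
    finally show ?thesis .
  qed
  have "(\<Sum>a<dimS20 n. lam a * (tensor_inner n phi (E a))\<^sup>2)
      = (\<Sum>a<dimS20 n. tensor_inner n phi (E a) * tensor_inner n (Rring n R phi) (E a))"
    by (intro sum.cong refl) (simp add: power2_eq_square key[symmetric])
  also have "\<dots> = tensor_inner n phi (Rring n R phi)"
    by (rule parseval[OF n EV Eon phi Rring_symtl[OF n phi]])
  also have "\<dots> = tensor_inner n phi (Rbar n R phi)" by (rule ti_Rring[where phi=phi and n=n, OF trphi])
  also have "\<dots> = Qf n R phi phi" unfolding Qf_def by (rule ti_sym)
  finally show "(\<Sum>a<dimS20 n. lam a * (tensor_inner n phi (E a))\<^sup>2) = Qf n R phi phi" .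
  show "(\<Sum>a<dimS20 n. (tensor_inner n phi (E a))\<^sup>2) = tensor_inner n phi phi"
    using parseval[OF n EV Eon phi phi] by (simp add: power2_eq_square)
qed

end

lemma cauchy_sum: "finite J \<Longrightarrow> (\<Sum>k\<in>J. x k)\<^sup>2 \<le> real (card J) * (\<Sum>k\<in>J. (x k)\<^sup>2)"
proof -
  assume fin: "finite J"
  have "0 \<le> (\<Sum>k\<in>J. \<Sum>l\<in>J. (x k - x l)\<^sup>2)" by (intro sum_nonneg) auto
  also have "(\<Sum>k\<in>J. \<Sum>l\<in>J. (x k - x l)\<^sup>2) = (\<Sum>k\<in>J. \<Sum>l\<in>J. (x k)\<^sup>2 + (x l)\<^sup>2 - 2 * x k * x l)"
    by (simp add: power2_diff)
  also have "\<dots> = (\<Sum>k\<in>J. real (card J) * (x k)\<^sup>2 + (\<Sum>l\<in>J. (x l)\<^sup>2) - 2 * x k * (\<Sum>l\<in>J. x l))"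
    by (intro sum.cong refl) (simp add: sum.distrib sum_subtractf sum_distrib_left mult.assoc)
  also have "\<dots> = (\<Sum>k\<in>J. real (card J) * (x k)\<^sup>2) + (\<Sum>k\<in>J. (\<Sum>l\<in>J. (x l)\<^sup>2)) - (\<Sum>k\<in>J. 2 * x k * (\<Sum>l\<in>J. x l))"
    by (simp only: sum.distrib sum_subtractf)
  also have "\<dots> = real (card J) * (\<Sum>k\<in>J. (x k)\<^sup>2) + real (card J) * (\<Sum>l\<in>J. (x l)\<^sup>2) - 2 * (\<Sum>k\<in>J. x k) * (\<Sum>l\<in>J. x l)"
    by (simp only: sum_distrib_left[symmetric] sum_distrib_right[symmetric] sum_constant)
  also have "\<dots> = 2 * (real (card J) * (\<Sum>k\<in>J. (x k)\<^sup>2)) - 2 * (\<Sum>k\<in>J. x k)\<^sup>2"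
    by (simp add: power2_eq_square)
  finally show ?thesis by simp
qed

definition Se :: "(nat \<Rightarrow> real) \<Rightarrow> (nat \<Rightarrow> real) \<Rightarrow> nat \<Rightarrow> nat \<Rightarrow> real" where
  "Se u v = (\<lambda>i j. 1 * op u v i j + 1 * op v u i j)"
definition Ps :: "nat \<Rightarrow> (nat \<Rightarrow> real) \<Rightarrow> nat \<Rightarrow> nat \<Rightarrow> real" where
  "Ps n u = (\<lambda>i j. 1 * op u u i j + (- 1 / real n) * dl i j)"
definition Pout :: "nat \<Rightarrow> (nat \<Rightarrow> nat \<Rightarrow> real) \<Rightarrow> nat \<Rightarrow> nat \<Rightarrow> nat \<Rightarrow> real" where
  "Pout n e p = (\<lambda>i j. \<Sum>k\<in>{p..<n}. op (e k) (e k) i j)"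
definition Chi :: "nat \<Rightarrow> (nat \<Rightarrow> nat \<Rightarrow> real) \<Rightarrow> nat \<Rightarrow> nat \<Rightarrow> nat \<Rightarrow> real" where
  "Chi n e p = (\<lambda>i j. 1 * Pout n e p i j + (- real (n - p) / real n) * dl i j)"
definition dot :: "nat \<Rightarrow> (nat \<Rightarrow> real) \<Rightarrow> (nat \<Rightarrow> real) \<Rightarrow> real" where
  "dot n x y = (\<Sum>a<n. x a * y a)"

lemma ti_op_op: "tensor_inner n (op x y) (op z w) = dot n x z * dot n y w"
  unfolding tensor_inner_def op_def dot_def sum_product by (intro sum.cong refl) (simp add: algebra_simps)
lemma ti_op_dl: "tensor_inner n (op x y) dl = dot n x y"
  unfolding tensor_inner_def op_def dot_def dl_def by (simp add: if_distrib[of "\<lambda>x. _ * x"] cong: if_cong)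
lemma ti_dl_op: "tensor_inner n dl (op x y) = dot n x y"
  by (subst ti_sym) (rule ti_op_dl)
lemma ti_dl_dl: "tensor_inner n dl dl = real n"
  unfolding tensor_inner_def dl_def by (simp add: if_distrib[of "\<lambda>x. _ * x"] cong: if_cong)
lemma ti_sum_left: "tensor_inner n (\<lambda>i j. \<Sum>m\<in>M. h m i j) k = (\<Sum>m\<in>M. tensor_inner n (h m) k)"
proof -
  have "tensor_inner n (\<lambda>i j. \<Sum>m\<in>M. h m i j) k = (\<Sum>i<n. \<Sum>j<n. \<Sum>m\<in>M. h m i j * k i j)"
    unfolding tensor_inner_def by (simp add: sum_distrib_right)
  also have "\<dots> = (\<Sum>m\<in>M. \<Sum>i<n. \<Sum>j<n. h m i j * k i j)" by (rule sum_move3[symmetric])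
  finally show ?thesis unfolding tensor_inner_def .
qed
lemma ti_sum_right: "tensor_inner n k (\<lambda>i j. \<Sum>m\<in>M. h m i j) = (\<Sum>m\<in>M. tensor_inner n k (h m))"
  by (subst ti_sym) (simp add: ti_sum_left ti_sym[of n _ k])
lemma ti_dl_h: "tensor_inner n dl h = (\<Sum>i<n. h i i)"
  unfolding tensor_inner_def dl_def by (simp add: if_distrib[of "\<lambda>x. x * _"] cong: if_cong)

context
  fixes n :: nat and R :: "nat \<Rightarrow> nat \<Rightarrow> nat \<Rightarrow> nat \<Rightarrow> real" and e :: "nat \<Rightarrow> nat \<Rightarrow> real" and p :: nat
  assumes acR: "alg_curv_tensor n R" and onb: "orthonormal_basis n e" and n1: "n \<ge> 1"
begin

lemma dot_e: "i < n \<Longrightarrow> j < n \<Longrightarrow> dot n (e i) (e j) = (if i = j then 1 else 0)"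
  using onb unfolding orthonormal_basis_def dot_def by auto

lemma Qf_Se: "Qf n R (Se u v) (Se u v) = 2 * tensor4 n R u v u v"
  unfolding Se_def Qf_lin_left Qf_lin_right Qf_op
  using T_xx[OF acR] T_zz[OF acR] T_anti12[OF acR, of u v u v] by simp

lemma Qf_Ps: "Qf n R (Ps n u) (Ps n u) = 2 / real n * ricci n R u u - scal n R / (real n)\<^sup>2"
  unfolding Ps_def Qf_lin_left Qf_lin_right Qf_op Qf_op_dl[OF acR] Qf_dl_op[OF acR] Qf_dl_dl[OF acR]
  using T_xx[OF acR] n1 by (simp add: power2_eq_square field_simps)

lemma Qf_Pout_Pout: "Qf n R (Pout n e p) (Pout n e p) = - (\<Sum>k\<in>{p..<n}. \<Sum>l\<in>{p..<n}. tensor4 n R (e k) (e l) (e k) (e l))"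
proof -
  have "Qf n R (Pout n e p) (Pout n e p) = (\<Sum>k\<in>{p..<n}. \<Sum>l\<in>{p..<n}. tensor4 n R (e l) (e k) (e k) (e l))"
    unfolding Pout_def Qf_sum_left Qf_sum_right Qf_op ..
  also have "\<dots> = (\<Sum>k\<in>{p..<n}. \<Sum>l\<in>{p..<n}. - tensor4 n R (e k) (e l) (e k) (e l))"
    by (intro sum.cong refl T_anti1[OF acR])
  finally show ?thesis by (simp add: sum_negf)
qed

lemma Qf_Pout_dl: "Qf n R (Pout n e p) dl = - (\<Sum>k\<in>{p..<n}. ricci n R (e k) (e k))"
  unfolding Pout_def Qf_sum_left Qf_op_dl[OF acR] by (simp add: sum_negf)

lemma Qf_dl_Pout: "Qf n R dl (Pout n e p) = - (\<Sum>k\<in>{p..<n}. ricci n R (e k) (e k))"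
  by (subst Qf_sym[OF acR]) (rule Qf_Pout_dl)

lemma Qf_Chi: "Qf n R (Chi n e p) (Chi n e p) = - (\<Sum>k\<in>{p..<n}. \<Sum>l\<in>{p..<n}. tensor4 n R (e k) (e l) (e k) (e l))
   + 2 * (real (n - p) / real n) * (\<Sum>k\<in>{p..<n}. ricci n R (e k) (e k)) - (real (n - p) / real n)\<^sup>2 * scal n R"
  unfolding Chi_def Qf_lin_left Qf_lin_right Qf_Pout_Pout Qf_Pout_dl Qf_dl_Pout Qf_dl_dl[OF acR]
  by (simp add: power2_eq_square algebra_simps)

end

lemma sum_split_at: "p \<le> n \<Longrightarrow> (\<Sum>i<n. f i) = (\<Sum>i<p. f i) + (\<Sum>i\<in>{p..<n}. f (i::nat))"
proof -
  assume "p \<le> n"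
  then have "{..<n} = {..<p} \<union> {p..<n}" by auto
  moreover have "sum f ({..<p} \<union> {p..<n}) = sum f {..<p} + sum f {p..<n}" by (rule sum.union_disjoint) auto
  ultimately show ?thesis by simp
qed

lemma ti_op_sym: "(\<And>i j. i < n \<Longrightarrow> j < n \<Longrightarrow> h i j = h j i) \<Longrightarrow> tensor_inner n (op v u) h = tensor_inner n (op u v) h"
proof -
  assume hs: "\<And>i j. i < n \<Longrightarrow> j < n \<Longrightarrow> h i j = h j i"
  have "tensor_inner n (op v u) h = (\<Sum>i<n. \<Sum>j<n. v i * u j * h j i)"
    unfolding tensor_inner_def op_def using hs by (intro sum.cong refl) auto
  also have "\<dots> = (\<Sum>j<n. \<Sum>i<n. v i * u j * h j i)" by (rule sum.swap)
  also have "\<dots> = tensor_inner n (op u v) h"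
    unfolding tensor_inner_def op_def by (intro sum.cong refl) (simp add: algebra_simps)
  finally show ?thesis .
qed

lemma parseval_vec:
  assumes onb: "orthonormal_basis n e"
  shows "(\<Sum>i<n. (\<Sum>a<n. f a * e i a)\<^sup>2) = (\<Sum>a<n. (f a)\<^sup>2)"
proof -
  have "(\<Sum>i<n. (\<Sum>a<n. f a * e i a)\<^sup>2) = (\<Sum>i<n. \<Sum>a<n. \<Sum>c<n. f a * f c * (e i a * e i c))"
    unfolding power2_eq_square sum_product by (simp add: algebra_simps)
  also have "\<dots> = (\<Sum>a<n. \<Sum>c<n. \<Sum>i<n. f a * f c * (e i a * e i c))" by (rule sum_move3)
  also have "\<dots> = (\<Sum>a<n. \<Sum>c<n. f a * f c * (if a = c then 1 else 0))"
    using col_orth[OF onb] by (simp add: sum_distrib_left[symmetric])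
  also have "\<dots> = (\<Sum>a<n. (f a)\<^sup>2)" by (simp add: power2_eq_square)
  finally show ?thesis .
qed

lemma ti_basis:
  assumes onb: "orthonormal_basis n e"
  shows "tensor_inner n h h = (\<Sum>i<n. \<Sum>j<n. (tensor_inner n (op (e i) (e j)) h)\<^sup>2)"
proof -
  define G where "G i b = (\<Sum>a<n. h a b * e i a)" for i b
  have H: "tensor_inner n (op (e i) (e j)) h = (\<Sum>b<n. G i b * e j b)" for i j
  proof -
    have "tensor_inner n (op (e i) (e j)) h = (\<Sum>a<n. \<Sum>b<n. h a b * e i a * e j b)"
      unfolding tensor_inner_def op_def by (simp add: algebra_simps)
    also have "\<dots> = (\<Sum>b<n. \<Sum>a<n. h a b * e i a * e j b)" by (rule sum.swap)
    finally show ?thesis unfolding G_def by (simp add: sum_distrib_right)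
  qed
  have "(\<Sum>i<n. \<Sum>j<n. (tensor_inner n (op (e i) (e j)) h)\<^sup>2) = (\<Sum>i<n. \<Sum>b<n. (G i b)\<^sup>2)"
    unfolding H by (intro sum.cong refl parseval_vec[OF onb])
  also have "\<dots> = (\<Sum>b<n. \<Sum>i<n. (G i b)\<^sup>2)" by (rule sum.swap)
  also have "\<dots> = (\<Sum>b<n. \<Sum>a<n. (h a b)\<^sup>2)"
    unfolding G_def by (intro sum.cong refl parseval_vec[OF onb])
  also have "\<dots> = tensor_inner n h h"
    unfolding tensor_inner_def power2_eq_square by (rule sum.swap)
  finally show ?thesis by simp
qed

lemma ti_Se_h: "tensor_inner n (Se u v) h = tensor_inner n (op u v) h + tensor_inner n (op v u) h"
  unfolding Se_def ti_lin_left by simp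
lemma ti_Ps_h: "tensor_inner n (Ps n u) h = tensor_inner n (op u u) h - (\<Sum>i<n. h i i) / real n"
  unfolding Ps_def ti_lin_left ti_dl_h by simp
lemma ti_Chi_h: "tensor_inner n (Chi n e p) h = (\<Sum>k\<in>{p..<n}. tensor_inner n (op (e k) (e k)) h) - real (n - p) / real n * (\<Sum>i<n. h i i)"
  unfolding Chi_def ti_lin_left ti_dl_h Pout_def ti_sum_left by simp

context
  fixes n :: nat and e :: "nat \<Rightarrow> nat \<Rightarrow> real" and p :: nat
  assumes onb: "orthonormal_basis n e" and n1: "n \<ge> 1" and pn: "p \<le> n"
begin

lemma dot_e': "i < n \<Longrightarrow> j < n \<Longrightarrow> dot n (e i) (e j) = (if i = j then 1 else 0)"
  using onb unfolding orthonormal_basis_def dot_def by auto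

lemma ti_Se_Se: "i < n \<Longrightarrow> j < n \<Longrightarrow> i \<noteq> j \<Longrightarrow> tensor_inner n (Se (e i) (e j)) (Se (e i) (e j)) = 2"
  unfolding Se_def ti_lin_left ti_lin_right ti_op_op by (simp add: dot_e')

lemma ti_Ps_Ps: "i < n \<Longrightarrow> tensor_inner n (Ps n (e i)) (Ps n (e i)) = 1 - 1 / real n"
  unfolding Ps_def ti_lin_left ti_lin_right ti_op_op ti_op_dl ti_dl_op ti_dl_dl
  using n1 by (simp add: dot_e' field_simps power2_eq_square)

lemma ti_Pout_Pout: "tensor_inner n (Pout n e p) (Pout n e p) = real (n - p)"
  unfolding Pout_def ti_sum_left ti_sum_right ti_op_op
  by (simp add: dot_e' if_distrib[of "\<lambda>x. x * _"] cong: if_cong)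

lemma ti_Pout_dl: "tensor_inner n (Pout n e p) dl = real (n - p)"
  unfolding Pout_def ti_sum_left ti_op_dl by (simp add: dot_e')

lemma ti_Chi_Chi: "tensor_inner n (Chi n e p) (Chi n e p) = real (n - p) * real p / real n"
proof -
  have "tensor_inner n (Chi n e p) (Chi n e p) = real (n - p) - 2 * (real (n - p) / real n) * real (n - p) + (real (n - p) / real n)\<^sup>2 * real n"
    unfolding Chi_def ti_lin_left ti_lin_right ti_Pout_Pout ti_Pout_dl ti_dl_dl
    by (subst ti_sym, unfold ti_Pout_dl) (simp add: power2_eq_square algebra_simps)
  also have "\<dots> = real (n - p) * real p / real n"
    using n1 pn by (simp add: of_nat_diff field_simps power2_eq_square)
  finally show ?thesis .
qed

lemma symtl_Se: "i < n \<Longrightarrow> j < n \<Longrightarrow> i \<noteq> j \<Longrightarrow> symtl n (Se (e i) (e j))"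
proof -
  assume ij: "i < n" "j < n" "i \<noteq> j"
  have "(\<Sum>a<n. Se (e i) (e j) a a) = 2 * dot n (e i) (e j)"
    unfolding Se_def op_def dot_def by (simp add: sum_distrib_left algebra_simps)
  then show ?thesis using dot_e'[OF ij(1,2)] ij unfolding symtl_def by (auto simp: Se_def op_def)
qed

lemma symtl_Ps: "i < n \<Longrightarrow> symtl n (Ps n (e i))"
  unfolding symtl_def Ps_def op_def dl_def using dot_e'[of i i] n1 unfolding dot_def
  by (auto simp: sum.distrib sum_subtractf)

lemma symtl_Chi: "symtl n (Chi n e p)"
proof -
  have "(\<Sum>i<n. Pout n e p i i) = (\<Sum>k\<in>{p..<n}. dot n (e k) (e k))"
    unfolding Pout_def op_def dot_def by (rule sum.swap)
  also have "\<dots> = real (n - p)" by (simp add: dot_e')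
  finally have "(\<Sum>i<n. Pout n e p i i) = real (n - p)" .
  then have "(\<Sum>i<n. Chi n e p i i) = 0"
    unfolding Chi_def dl_def using n1 by (simp add: sum.distrib sum_subtractf)
  moreover have "Chi n e p i j = Chi n e p j i" for i j
    unfolding Chi_def Pout_def op_def dl_def by (simp add: mult.commute)
  ultimately show ?thesis unfolding symtl_def by auto
qed

end

lemma kyfan:
  fixes lam d :: "nat \<Rightarrow> real" and N :: nat and \<alpha> :: real
  assumes sorted: "\<And>a b. a \<le> b \<Longrightarrow> b < N \<Longrightarrow> lam a \<le> lam b"
    and d0: "\<And>a. a < N \<Longrightarrow> 0 \<le> d a" and d1: "\<And>a. a < N \<Longrightarrow> d a \<le> 1"
    and sumd: "(\<Sum>a<N. d a) = \<alpha>" and a0: "0 \<le> \<alpha>" and aN: "\<alpha> < real N"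
  shows "eig_partial_sum lam \<alpha> \<le> (\<Sum>a<N. lam a * d a)"
proof -
  define k where "k = nat \<lfloor>\<alpha>\<rfloor>"
  define f where "f = \<alpha> - of_int \<lfloor>\<alpha>\<rfloor>"
  have kfl: "real k = of_int \<lfloor>\<alpha>\<rfloor>" unfolding k_def using a0 by simp
  have f0: "0 \<le> f" and f1: "f < 1" unfolding f_def by linarith+
  have kN: "k < N"
  proof -
    have "real k \<le> \<alpha>" using kfl by linarith
    then show ?thesis using aN by linarith
  qed
  define c where "c a = (if a < k then 1 else if a = k then f else 0)" for a
  have splitN: "(\<Sum>a<N. g a) = (\<Sum>a<k. g a) + g k + (\<Sum>a\<in>{Suc k..<N}. g a)" for g :: "nat \<Rightarrow> real"
  proof -
    have "(\<Sum>a<N. g a) = (\<Sum>a<k. g a) + (\<Sum>a\<in>{k..<N}. g a)" by (rule sum_split_at) (use kN in simp)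
    moreover have "{k..<N} = insert k {Suc k..<N}" using kN by auto
    ultimately show ?thesis by simp
  qed
  have sumc: "(\<Sum>a<N. c a) = \<alpha>"
    unfolding splitN[of c] unfolding c_def using kfl f_def by simp
  have ps: "eig_partial_sum lam \<alpha> = (\<Sum>a<N. lam a * c a)"
  proof -
    have "(\<Sum>a<N. lam a * c a) = (\<Sum>a<k. lam a * c a) + lam k * c k + (\<Sum>a\<in>{Suc k..<N}. lam a * c a)"
      by (rule splitN)
    also have "(\<Sum>a<k. lam a * c a) = (\<Sum>a<k. lam a)" by (intro sum.cong refl) (simp add: c_def)
    also have "(\<Sum>a\<in>{Suc k..<N}. lam a * c a) = 0" by (intro sum.neutral) (simp add: c_def)
    finally show ?thesis unfolding eig_partial_sum_def k_def[symmetric] f_def[symmetric] by (simp add: c_def)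
  qed
  have trm: "lam k * (d a - c a) \<le> lam a * (d a - c a)" if a: "a < N" for a
  proof (cases "a < k")
    case True
    then have "d a - c a \<le> 0" using d1[OF a] by (simp add: c_def)
    moreover have "lam a \<le> lam k" using sorted[of a k] True kN by simp
    ultimately show ?thesis by (simp add: mult_right_mono_neg)
  next
    case False
    show ?thesis
    proof (cases "a = k")
      case True then show ?thesis by simp
    next
      case False2: False
      then have "0 \<le> d a - c a" using d0[OF a] False by (simp add: c_def)
      moreover have "lam k \<le> lam a" using sorted[of k a] False False2 a by simp
      ultimately show ?thesis by (simp add: mult_right_mono)
    qed
  qed
  have "(\<Sum>a<N. lam k * (d a - c a)) \<le> (\<Sum>a<N. lam a * (d a - c a))"
    by (rule sum_mono) (use trm in simp)
  moreover have "(\<Sum>a<N. lam k * (d a - c a)) = 0"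
    by (simp add: sum_distrib_left[symmetric] sum_subtractf sumd sumc)
  ultimately have "0 \<le> (\<Sum>a<N. lam a * d a) - (\<Sum>a<N. lam a * c a)"
    by (simp add: sum_subtractf algebra_simps)
  then show ?thesis using ps by simp
qed

lemma fsum2:
  fixes phi :: "nat \<Rightarrow> nat \<Rightarrow> nat \<Rightarrow> nat \<Rightarrow> real" and cc :: "nat \<Rightarrow> nat \<Rightarrow> real"
  assumes F: "\<And>i j. i \<in> I \<Longrightarrow> j \<in> J i \<Longrightarrow> (\<Sum>a<N. g a * (tensor_inner n (phi i j) (E a))\<^sup>2) = V i j"
  shows "(\<Sum>a<N. g a * (\<Sum>i\<in>I. \<Sum>j\<in>J i. cc i j * (tensor_inner n (phi i j) (E a))\<^sup>2))
       = (\<Sum>i\<in>I. \<Sum>j\<in>J i. cc i j * V i j)"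
proof -
  have "(\<Sum>a<N. g a * (\<Sum>i\<in>I. \<Sum>j\<in>J i. cc i j * (tensor_inner n (phi i j) (E a))\<^sup>2))
      = (\<Sum>a<N. \<Sum>i\<in>I. \<Sum>j\<in>J i. cc i j * (g a * (tensor_inner n (phi i j) (E a))\<^sup>2))"
    by (simp add: sum_distrib_left algebra_simps)
  also have "\<dots> = (\<Sum>i\<in>I. \<Sum>a<N. \<Sum>j\<in>J i. cc i j * (g a * (tensor_inner n (phi i j) (E a))\<^sup>2))"
    by (rule sum.swap)
  also have "\<dots> = (\<Sum>i\<in>I. \<Sum>j\<in>J i. \<Sum>a<N. cc i j * (g a * (tensor_inner n (phi i j) (E a))\<^sup>2))"
    by (rule sum.cong[OF refl], rule sum.swap)
  also have "\<dots> = (\<Sum>i\<in>I. \<Sum>j\<in>J i. cc i j * V i j)"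
    by (intro sum.cong refl) (simp add: sum_distrib_left[symmetric] F)
  finally show ?thesis .
qed

lemma fsum1:
  fixes phi :: "nat \<Rightarrow> nat \<Rightarrow> nat \<Rightarrow> real" and cc :: "nat \<Rightarrow> real"
  assumes F: "\<And>i. i \<in> I \<Longrightarrow> (\<Sum>a<N. g a * (tensor_inner n (phi i) (E a))\<^sup>2) = V i"
  shows "(\<Sum>a<N. g a * (\<Sum>i\<in>I. cc i * (tensor_inner n (phi i) (E a))\<^sup>2))
       = (\<Sum>i\<in>I. cc i * V i)"
proof -
  have "(\<Sum>a<N. g a * (\<Sum>i\<in>I. cc i * (tensor_inner n (phi i) (E a))\<^sup>2))
      = (\<Sum>a<N. \<Sum>i\<in>I. cc i * (g a * (tensor_inner n (phi i) (E a))\<^sup>2))"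
    by (simp add: sum_distrib_left algebra_simps)
  also have "\<dots> = (\<Sum>i\<in>I. \<Sum>a<N. cc i * (g a * (tensor_inner n (phi i) (E a))\<^sup>2))"
    by (rule sum.swap)
  also have "\<dots> = (\<Sum>i\<in>I. cc i * V i)"
    by (intro sum.cong refl) (simp add: sum_distrib_left[symmetric] F)
  finally show ?thesis .
qed


lemma alg_main:
  fixes A2 B CC m nn pp w :: real
  assumes m0: "m > 0" and n0: "nn > 0" and pp: "pp = nn - m" and w: "w = m / (2 * (m + 1))"
  shows "A2/2 + w * B + w * (2 / nn * (A2 + B) - pp * (A2 + 2*B + CC) / nn\<^sup>2)
     + w / m * (- CC + 2 * (m / nn) * (B + CC) - (m / nn)\<^sup>2 * (A2 + 2*B + CC))
     = (m + 2) / (2 * (m + 1)) * (A2 + B) - pp * (A2 + 2*B + CC) / (2 * nn * (m + 1))"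
proof -
  have h: "inverse m * m = 1" "inverse nn * nn = 1" "inverse (m + 1) * (m + 1) = 1" using m0 n0 by auto
  show ?thesis unfolding w pp divide_inverse inverse_mult_distrib power_inverse[symmetric]
    using h by algebra
qed

lemma sum_minus_add: "finite A \<Longrightarrow> i \<in> A \<Longrightarrow> (\<Sum>j\<in>A-{i}. f j) + f i = sum f A"
  using sum.remove[of A i f] by (simp add: add.commute)

context
  fixes n :: nat and R :: "nat \<Rightarrow> nat \<Rightarrow> nat \<Rightarrow> nat \<Rightarrow> real" and e :: "nat \<Rightarrow> nat \<Rightarrow> real"
    and p :: nat and lam :: "nat \<Rightarrow> real" and E :: "nat \<Rightarrow> nat \<Rightarrow> nat \<Rightarrow> real"
  assumes acR: "alg_curv_tensor n R" and onb: "orthonormal_basis n e" and n3: "n \<ge> 3"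
    and p1: "1 \<le> p" and p2: "2 * p \<le> n"
    and EV: "\<And>a. a < dimS20 n \<Longrightarrow> E a \<in> S20 n"
    and Eon: "\<And>a b. a < dimS20 n \<Longrightarrow> b < dimS20 n \<Longrightarrow> tensor_inner n (E a) (E b) = (if a = b then 1 else 0)"
    and eig: "\<And>a. a < dimS20 n \<Longrightarrow> Rring n R (E a) = (\<lambda>i j. lam a * E a i j)"
begin

lemma n1: "n \<ge> 1" using n3 by simp
lemma pn: "p < n" using p1 p2 by simp

definition K where "K i j = tensor4 n R (e i) (e j) (e i) (e j)"
definition ric where "ric i = ricci n R (e i) (e i)"
definition HH where "HH h i j = tensor_inner n (op (e i) (e j)) h"

lemma ric_K: "ric i = (\<Sum>k<n. K i k)"
  unfolding ric_def K_def by (rule ricci_basis[OF onb])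
lemma K_sym: "K i j = K j i"
  unfolding K_def by (rule T_anti12[OF acR, symmetric])
lemma K_diag: "K i i = 0"
  unfolding K_def by (rule T_xx[OF acR])
lemma scal_ric: "scal n R = (\<Sum>k<n. ric k)"
  unfolding ric_def by (rule scal_basis[OF acR onb])

lemma ric_minus: "i < n \<Longrightarrow> (\<Sum>j\<in>{..<n}-{i}. K i j) = ric i"
  unfolding ric_K by (simp add: sum_diff1 K_diag)

lemma frameF:
  assumes "symtl n phi"
  shows "(\<Sum>a<dimS20 n. lam a * (tensor_inner n phi (E a))\<^sup>2) = Qf n R phi phi"
    and "(\<Sum>a<dimS20 n. 1 * (tensor_inner n phi (E a))\<^sup>2) = tensor_inner n phi phi"
  using frame_lemma[OF acR n1 EV Eon eig assms] by simp_all

lemma HH_sym: "a < dimS20 n \<Longrightarrow> HH (E a) j i = HH (E a) i j"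
  unfolding HH_def using EV by (intro ti_op_sym) (auto simp: S20_def)

lemma pair_Se: "a < dimS20 n \<Longrightarrow> (tensor_inner n (Se (e i) (e j)) (E a))\<^sup>2 = 4 * (HH (E a) i j)\<^sup>2"
  unfolding ti_Se_h using ti_op_sym[of n "E a" "e j" "e i"] EV unfolding HH_def
  by (auto simp: S20_def power2_eq_square)

lemma pair_Ps: "a < dimS20 n \<Longrightarrow> tensor_inner n (Ps n (e i)) (E a) = HH (E a) i i"
  unfolding ti_Ps_h HH_def using EV by (auto simp: S20_def)

lemma pair_Chi: "a < dimS20 n \<Longrightarrow> tensor_inner n (Chi n e p) (E a) = (\<Sum>k\<in>{p..<n}. HH (E a) k k)"
  unfolding ti_Chi_h HH_def using EV by (auto simp: S20_def)

lemma norm_HH: "a < dimS20 n \<Longrightarrow> (\<Sum>i<n. \<Sum>j<n. (HH (E a) i j)\<^sup>2) = 1"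
  unfolding HH_def using ti_basis[OF onb, of "E a"] Eon[of a a] by simp

lemma pn': "p \<le> n" using pn by simp

lemmas sSe = symtl_Se[OF onb n1 pn']
lemmas sPs = symtl_Ps[OF onb n1 pn']
lemmas sChi = symtl_Chi[OF onb n1 pn']

lemma trace_lam: "(\<Sum>a<dimS20 n. lam a) = scal n R / 2 + scal n R / real n"
proof -
  define q' where "q' h = (\<Sum>i<n. \<Sum>j\<in>{..<n}-{i}. 1/4 * (tensor_inner n (Se (e i) (e j)) h)\<^sup>2) + (\<Sum>i<n. 1 * (tensor_inner n (Ps n (e i)) h)\<^sup>2)" for h
  have q1: "q' (E a) = 1" if a: "a < dimS20 n" for a
  proof -
    have "q' (E a) = (\<Sum>i<n. (\<Sum>j\<in>{..<n}-{i}. (HH (E a) i j)\<^sup>2) + (HH (E a) i i)\<^sup>2)"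
      unfolding q'_def pair_Se[OF a] pair_Ps[OF a] by (simp add: sum.distrib)
    also have "\<dots> = (\<Sum>i<n. \<Sum>j<n. (HH (E a) i j)\<^sup>2)"
      by (rule sum.cong[OF refl]) (rule sum_minus_add, auto)
    also have "\<dots> = 1" by (rule norm_HH[OF a])
    finally show ?thesis .
  qed
  have "(\<Sum>a<dimS20 n. lam a) = (\<Sum>a<dimS20 n. lam a * q' (E a))"
    by (intro sum.cong refl) (simp add: q1)
  also have "\<dots> = (\<Sum>a<dimS20 n. lam a * (\<Sum>i<n. \<Sum>j\<in>{..<n}-{i}. 1/4 * (tensor_inner n (Se (e i) (e j)) (E a))\<^sup>2))
                 + (\<Sum>a<dimS20 n. lam a * (\<Sum>i<n. 1 * (tensor_inner n (Ps n (e i)) (E a))\<^sup>2))"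
    unfolding q'_def distrib_left sum.distrib ..
  also have "\<dots> = (\<Sum>i<n. \<Sum>j\<in>{..<n}-{i}. 1/4 * Qf n R (Se (e i) (e j)) (Se (e i) (e j)))
                 + (\<Sum>i<n. 1 * Qf n R (Ps n (e i)) (Ps n (e i)))"
  proof -
    have "(\<Sum>a<dimS20 n. lam a * (\<Sum>i<n. \<Sum>j\<in>{..<n}-{i}. 1/4 * (tensor_inner n (Se (e i) (e j)) (E a))\<^sup>2))
       = (\<Sum>i<n. \<Sum>j\<in>{..<n}-{i}. 1/4 * Qf n R (Se (e i) (e j)) (Se (e i) (e j)))"
      by (rule fsum2) (rule frameF(1)[OF sSe], auto)
    moreover have "(\<Sum>a<dimS20 n. lam a * (\<Sum>i<n. 1 * (tensor_inner n (Ps n (e i)) (E a))\<^sup>2))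
       = (\<Sum>i<n. 1 * Qf n R (Ps n (e i)) (Ps n (e i)))"
      by (rule fsum1) (rule frameF(1)[OF sPs], auto)
    ultimately show ?thesis by simp
  qed
  also have "\<dots> = (\<Sum>i<n. \<Sum>j\<in>{..<n}-{i}. 1/2 * K i j) + (\<Sum>i<n. 2 / real n * ric i - scal n R / (real n)\<^sup>2)"
    unfolding Qf_Se[OF acR onb n1] Qf_Ps[OF acR onb n1] K_def ric_def by simp
  also have "(\<Sum>i<n. \<Sum>j\<in>{..<n}-{i}. 1/2 * K i j) = (\<Sum>i<n. 1/2 * ric i)"
    by (intro sum.cong refl) (subst sum_distrib_left[symmetric], simp add: ric_minus)
  also have "(\<Sum>i<n. 1/2 * ric i) = 1/2 * scal n R" by (simp add: sum_distrib_left scal_ric)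
  also have "(\<Sum>i<n. 2 / real n * ric i - scal n R / (real n)\<^sup>2) = 2 / real n * scal n R - real n * (scal n R / (real n)\<^sup>2)"
    by (simp add: sum_subtractf sum_distrib_left scal_ric)
  also have "1/2 * scal n R + (2 / real n * scal n R - real n * (scal n R / (real n)\<^sup>2)) = scal n R / 2 + scal n R / real n"
    using n1 by (simp add: field_simps power2_eq_square)
  finally show ?thesis .
qed

definition wgt where "wgt = real (n - p) / (2 * (real (n - p) + 1))"
definition qf where "qf h = (\<Sum>i<p. \<Sum>j\<in>{..<p}-{i}. 1/4 * (tensor_inner n (Se (e i) (e j)) h)\<^sup>2)
   + (\<Sum>i<p. \<Sum>j\<in>{p..<n}. wgt/2 * (tensor_inner n (Se (e i) (e j)) h)\<^sup>2)
   + (\<Sum>i<p. wgt * (tensor_inner n (Ps n (e i)) h)\<^sup>2)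
   + wgt / real (n - p) * (tensor_inner n (Chi n e p) h)\<^sup>2"

lemma gen_q:
  assumes F1: "\<And>i j. i < n \<Longrightarrow> j < n \<Longrightarrow> i \<noteq> j \<Longrightarrow> (\<Sum>a<dimS20 n. g a * (tensor_inner n (Se (e i) (e j)) (E a))\<^sup>2) = VS i j"
    and F2: "\<And>i. i < n \<Longrightarrow> (\<Sum>a<dimS20 n. g a * (tensor_inner n (Ps n (e i)) (E a))\<^sup>2) = VP i"
    and F3: "(\<Sum>a<dimS20 n. g a * (tensor_inner n (Chi n e p) (E a))\<^sup>2) = VC"
  shows "(\<Sum>a<dimS20 n. g a * qf (E a)) = (\<Sum>i<p. \<Sum>j\<in>{..<p}-{i}. 1/4 * VS i j)
     + (\<Sum>i<p. \<Sum>j\<in>{p..<n}. wgt/2 * VS i j) + (\<Sum>i<p. wgt * VP i) + wgt / real (n - p) * VC"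
proof -
  have "(\<Sum>a<dimS20 n. g a * qf (E a)) =
      (\<Sum>a<dimS20 n. g a * (\<Sum>i<p. \<Sum>j\<in>{..<p}-{i}. 1/4 * (tensor_inner n (Se (e i) (e j)) (E a))\<^sup>2))
    + (\<Sum>a<dimS20 n. g a * (\<Sum>i<p. \<Sum>j\<in>{p..<n}. wgt/2 * (tensor_inner n (Se (e i) (e j)) (E a))\<^sup>2))
    + (\<Sum>a<dimS20 n. g a * (\<Sum>i<p. wgt * (tensor_inner n (Ps n (e i)) (E a))\<^sup>2))
    + wgt / real (n - p) * (\<Sum>a<dimS20 n. g a * (tensor_inner n (Chi n e p) (E a))\<^sup>2)"
    unfolding qf_def distrib_left sum.distrib by (simp add: sum_distrib_left algebra_simps)
  moreover have "(\<Sum>a<dimS20 n. g a * (\<Sum>i<p. \<Sum>j\<in>{..<p}-{i}. 1/4 * (tensor_inner n (Se (e i) (e j)) (E a))\<^sup>2))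
      = (\<Sum>i<p. \<Sum>j\<in>{..<p}-{i}. 1/4 * VS i j)"
    by (rule fsum2) (rule F1, use pn in auto)
  moreover have "(\<Sum>a<dimS20 n. g a * (\<Sum>i<p. \<Sum>j\<in>{p..<n}. wgt/2 * (tensor_inner n (Se (e i) (e j)) (E a))\<^sup>2))
      = (\<Sum>i<p. \<Sum>j\<in>{p..<n}. wgt/2 * VS i j)"
    by (rule fsum2) (rule F1, use pn in auto)
  moreover have "(\<Sum>a<dimS20 n. g a * (\<Sum>i<p. wgt * (tensor_inner n (Ps n (e i)) (E a))\<^sup>2))
      = (\<Sum>i<p. wgt * VP i)"
    by (rule fsum1) (rule F2, use pn in auto)
  ultimately show ?thesis using F3 by simp
qed

definition CC where "CC = (\<Sum>k\<in>{p..<n}. \<Sum>l\<in>{p..<n}. K k l)"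

lemma lam_q: "(\<Sum>a<dimS20 n. lam a * qf (E a)) = (\<Sum>i<p. \<Sum>j\<in>{..<p}-{i}. 1/4 * (2 * K i j))
     + (\<Sum>i<p. \<Sum>j\<in>{p..<n}. wgt/2 * (2 * K i j)) + (\<Sum>i<p. wgt * (2 / real n * ric i - scal n R / (real n)\<^sup>2))
     + wgt / real (n - p) * (- CC + 2 * (real (n - p) / real n) * (\<Sum>k\<in>{p..<n}. ric k) - (real (n - p) / real n)\<^sup>2 * scal n R)"
proof (rule gen_q)
  show "(\<Sum>a<dimS20 n. lam a * (tensor_inner n (Se (e i) (e j)) (E a))\<^sup>2) = 2 * K i j"
    if "i < n" "j < n" "i \<noteq> j" for i j
    unfolding frameF(1)[OF sSe[OF that]] Qf_Se[OF acR onb n1] K_def ..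
  show "(\<Sum>a<dimS20 n. lam a * (tensor_inner n (Ps n (e i)) (E a))\<^sup>2) = 2 / real n * ric i - scal n R / (real n)\<^sup>2"
    if "i < n" for i
    unfolding frameF(1)[OF sPs[OF that]] Qf_Ps[OF acR onb n1] ric_def ..
  show "(\<Sum>a<dimS20 n. lam a * (tensor_inner n (Chi n e p) (E a))\<^sup>2) = - CC + 2 * (real (n - p) / real n) * (\<Sum>k\<in>{p..<n}. ric k) - (real (n - p) / real n)\<^sup>2 * scal n R"
    unfolding frameF(1)[OF sChi] Qf_Chi[OF acR onb n1] CC_def K_def ric_def ..
qed

lemma one_q: "(\<Sum>a<dimS20 n. 1 * qf (E a)) = (\<Sum>i<p. \<Sum>j\<in>{..<p}-{i}. 1/4 * 2)
     + (\<Sum>i<p. \<Sum>j\<in>{p..<n}. wgt/2 * 2) + (\<Sum>i<p. wgt * (1 - 1 / real n))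
     + wgt / real (n - p) * (real (n - p) * real p / real n)"
proof (rule gen_q)
  show "(\<Sum>a<dimS20 n. 1 * (tensor_inner n (Se (e i) (e j)) (E a))\<^sup>2) = 2"
    if "i < n" "j < n" "i \<noteq> j" for i j
    unfolding frameF(2)[OF sSe[OF that]] by (rule ti_Se_Se[OF onb n1 pn' that])
  show "(\<Sum>a<dimS20 n. 1 * (tensor_inner n (Ps n (e i)) (E a))\<^sup>2) = 1 - 1 / real n"
    if "i < n" for i
    unfolding frameF(2)[OF sPs[OF that]] by (rule ti_Ps_Ps[OF onb n1 pn' that])
  show "(\<Sum>a<dimS20 n. 1 * (tensor_inner n (Chi n e p) (E a))\<^sup>2) = real (n - p) * real p / real n"
    unfolding frameF(2)[OF sChi] by (rule ti_Chi_Chi[OF onb n1 pn'])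
qed

lemma real_np: "real (n - p) = real n - real p" using pn by (simp add: of_nat_diff)

lemma sum_q: "(\<Sum>a<dimS20 n. qf (E a)) = real (n - 1) * real p / 2"
proof -
  have c1: "(\<Sum>i<p. \<Sum>j\<in>{..<p}-{i}. 1/4 * (2::real)) = real p * (real p - 1) / 2"
  proof -
    have "(\<Sum>i<p. \<Sum>j\<in>{..<p}-{i}. 1/4 * (2::real)) = (\<Sum>i<p. (real p - 1) / 2)"
      by (intro sum.cong refl) (use p1 in \<open>simp add: of_nat_diff\<close>)
    then show ?thesis by simp
  qed
  have "(\<Sum>a<dimS20 n. qf (E a)) = (\<Sum>a<dimS20 n. 1 * qf (E a))" by simp
  also have "\<dots> = real p * (real p - 1) / 2 + real p * (real (n - p) * wgt) + real p * (wgt * (1 - 1 / real n))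
     + wgt / real (n - p) * (real (n - p) * real p / real n)"
    unfolding one_q c1 by simp
  also have "\<dots> = real (n - 1) * real p / 2"
  proof -
    define m where "m = real (n - p)"
    have m0: "m > 0" unfolding m_def using pn by simp
    have n0: "real n > 0" using n1 by simp
    have h1: "wgt / m * (m * real p / real n) = wgt * real p / real n" using m0 by simp
    have h3: "wgt * (m + 1) = m / 2" unfolding wgt_def m_def[symmetric] using m0 by (simp add: field_simps)
    have "real p * (real p - 1) / 2 + real p * (m * wgt) + real p * (wgt * (1 - 1 / real n)) + wgt / m * (m * real p / real n)
        = real p * (real p - 1) / 2 + real p * (wgt * (m + 1))"
      unfolding h1 using n0 by (simp add: field_simps)
    also have "\<dots> = real p * (real p - 1) / 2 + real p * m / 2" unfolding h3 by simp
    also have "\<dots> = real (n - 1) * real p / 2" unfolding m_def real_np using n1 by (simp add: of_nat_diff field_simps)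
    finally show ?thesis unfolding m_def .
  qed
  finally show ?thesis .
qed

lemma value_q: "(\<Sum>a<dimS20 n. lam a * qf (E a)) = (real (n - p) + 2) / (2 * (real (n - p) + 1)) * (\<Sum>i<p. ric i)
    - real p * scal n R / (2 * real n * (real (n - p) + 1))"
proof -
  define A2 where "A2 = (\<Sum>i<p. \<Sum>j<p. K i j)"
  define B where "B = (\<Sum>i<p. \<Sum>j\<in>{p..<n}. K i j)"
  have T1: "(\<Sum>i<p. \<Sum>j\<in>{..<p}-{i}. 1/4 * (2 * K i j)) = A2 / 2"
  proof -
    have "(\<Sum>i<p. \<Sum>j\<in>{..<p}-{i}. 1/4 * (2 * K i j)) = (\<Sum>i<p. 1/2 * (\<Sum>j<p. K i j))"
      by (intro sum.cong refl) (simp add: sum_diff1 K_diag sum_distrib_left)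
    also have "\<dots> = 1/2 * A2" unfolding A2_def by (rule sum_distrib_left[symmetric])
    finally show ?thesis by simp
  qed
  have T2: "(\<Sum>i<p. \<Sum>j\<in>{p..<n}. wgt/2 * (2 * K i j)) = wgt * B"
    unfolding B_def by (simp add: sum_distrib_left)
  have T3: "(\<Sum>i<p. wgt * (2 / real n * ric i - scal n R / (real n)\<^sup>2)) = wgt * (2 / real n * (\<Sum>i<p. ric i) - real p * scal n R / (real n)\<^sup>2)"
    by (simp only: sum_distrib_left[symmetric] sum_subtractf sum_constant) (simp add: sum_distrib_left)
  have r1: "(\<Sum>i<p. ric i) = A2 + B"
    unfolding A2_def B_def ric_K sum.distrib[symmetric] by (intro sum.cong refl sum_split_at[OF pn'])
  have r2: "(\<Sum>k\<in>{p..<n}. ric k) = B + CC"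
  proof -
    have "(\<Sum>k\<in>{p..<n}. ric k) = (\<Sum>k\<in>{p..<n}. \<Sum>l<p. K k l) + CC"
      unfolding CC_def ric_K sum.distrib[symmetric] by (intro sum.cong refl sum_split_at[OF pn'])
    also have "(\<Sum>k\<in>{p..<n}. \<Sum>l<p. K k l) = (\<Sum>l<p. \<Sum>k\<in>{p..<n}. K k l)" by (rule sum.swap)
    also have "\<dots> = B" unfolding B_def by (simp add: K_sym)
    finally show ?thesis .
  qed
  have r3: "scal n R = A2 + 2 * B + CC"
    unfolding scal_ric using sum_split_at[OF pn', of ric] r1 r2 by simp
  have "(\<Sum>a<dimS20 n. lam a * qf (E a)) = A2/2 + wgt * B + wgt * (2 / real n * (A2 + B) - real p * (A2 + 2*B + CC) / (real n)\<^sup>2)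
     + wgt / real (n - p) * (- CC + 2 * (real (n - p) / real n) * (B + CC) - (real (n - p) / real n)\<^sup>2 * (A2 + 2*B + CC))"
    unfolding lam_q T1 T2 T3 unfolding r1 r2 r3 ..
  also have "\<dots> = (real (n - p) + 2) / (2 * (real (n - p) + 1)) * (A2 + B) - real p * (A2 + 2*B + CC) / (2 * real n * (real (n - p) + 1))"
    by (rule alg_main) (use pn n1 in \<open>auto simp: wgt_def real_np\<close>)
  finally show ?thesis unfolding r1 r3 .
qed

lemma wgt_bounds: "0 \<le> wgt" "wgt \<le> 1/2"
  unfolding wgt_def by (auto simp: field_simps)

lemma qf_bounds:
  assumes a: "a < dimS20 n"
  shows "0 \<le> qf (E a)" "qf (E a) \<le> 1"
proof -
  define H where "H = HH (E a)"
  have Hs: "H j i = H i j" for i j unfolding H_def by (rule HH_sym[OF a])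
  have m0: "real (n - p) > 0" using pn by simp
  have qf_H: "qf (E a) = (\<Sum>i<p. \<Sum>j\<in>{..<p}-{i}. (H i j)\<^sup>2) + (\<Sum>i<p. \<Sum>j\<in>{p..<n}. 2 * wgt * (H i j)\<^sup>2)
     + (\<Sum>i<p. wgt * (H i i)\<^sup>2) + wgt / real (n - p) * (\<Sum>k\<in>{p..<n}. H k k)\<^sup>2"
    unfolding qf_def pair_Se[OF a] pair_Ps[OF a] pair_Chi[OF a] H_def by (simp add: mult.assoc)
  show "0 \<le> qf (E a)" unfolding qf_H using wgt_bounds m0
    by (intro add_nonneg_nonneg sum_nonneg mult_nonneg_nonneg) auto
  have P1: "(\<Sum>i<p. \<Sum>j\<in>{..<p}-{i}. (H i j)\<^sup>2) + (\<Sum>i<p. wgt * (H i i)\<^sup>2) \<le> (\<Sum>i<p. \<Sum>j<p. (H i j)\<^sup>2)"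
  proof -
    have "(\<Sum>i<p. \<Sum>j\<in>{..<p}-{i}. (H i j)\<^sup>2) + (\<Sum>i<p. wgt * (H i i)\<^sup>2) = (\<Sum>i<p. (\<Sum>j\<in>{..<p}-{i}. (H i j)\<^sup>2) + wgt * (H i i)\<^sup>2)"
      by (simp add: sum.distrib)
    also have "\<dots> \<le> (\<Sum>i<p. (\<Sum>j\<in>{..<p}-{i}. (H i j)\<^sup>2) + (H i i)\<^sup>2)"
    proof (rule sum_mono)
      fix i
      have "wgt * (H i i)\<^sup>2 \<le> 1 * (H i i)\<^sup>2" using wgt_bounds by (intro mult_right_mono) auto
      then show "(\<Sum>j\<in>{..<p}-{i}. (H i j)\<^sup>2) + wgt * (H i i)\<^sup>2 \<le> (\<Sum>j\<in>{..<p}-{i}. (H i j)\<^sup>2) + (H i i)\<^sup>2" by simp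
    qed
    also have "\<dots> = (\<Sum>i<p. \<Sum>j<p. (H i j)\<^sup>2)"
      by (rule sum.cong[OF refl]) (rule sum_minus_add, auto)
    finally show ?thesis .
  qed
  have swapJ: "(\<Sum>i\<in>{p..<n}. \<Sum>j<p. (H i j)\<^sup>2) = (\<Sum>i<p. \<Sum>j\<in>{p..<n}. (H i j)\<^sup>2)"
    by (subst sum.swap) (simp add: Hs)
  have P2: "(\<Sum>i<p. \<Sum>j\<in>{p..<n}. 2 * wgt * (H i j)\<^sup>2) \<le> (\<Sum>i<p. \<Sum>j\<in>{p..<n}. (H i j)\<^sup>2) + (\<Sum>i\<in>{p..<n}. \<Sum>j<p. (H i j)\<^sup>2)"
  proof -
    have "(\<Sum>i<p. \<Sum>j\<in>{p..<n}. 2 * wgt * (H i j)\<^sup>2) \<le> (\<Sum>i<p. \<Sum>j\<in>{p..<n}. 1 * (H i j)\<^sup>2)"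
      using wgt_bounds by (intro sum_mono mult_right_mono) auto
    also have "\<dots> \<le> (\<Sum>i<p. \<Sum>j\<in>{p..<n}. (H i j)\<^sup>2) + (\<Sum>i\<in>{p..<n}. \<Sum>j<p. (H i j)\<^sup>2)"
      by (simp add: sum_nonneg)
    finally show ?thesis .
  qed
  have P3: "wgt / real (n - p) * (\<Sum>k\<in>{p..<n}. H k k)\<^sup>2 \<le> (\<Sum>i\<in>{p..<n}. \<Sum>j\<in>{p..<n}. (H i j)\<^sup>2)"
  proof -
    have "(\<Sum>k\<in>{p..<n}. H k k)\<^sup>2 \<le> real (n - p) * (\<Sum>k\<in>{p..<n}. (H k k)\<^sup>2)"
      using cauchy_sum[of "{p..<n}" "\<lambda>k. H k k"] by simp
    then have "wgt / real (n - p) * (\<Sum>k\<in>{p..<n}. H k k)\<^sup>2 \<le> wgt / real (n - p) * (real (n - p) * (\<Sum>k\<in>{p..<n}. (H k k)\<^sup>2))"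
      using wgt_bounds m0 by (intro mult_left_mono) auto
    also have "\<dots> = wgt * (\<Sum>k\<in>{p..<n}. (H k k)\<^sup>2)" using m0 by simp
    also have "\<dots> \<le> 1 * (\<Sum>k\<in>{p..<n}. (H k k)\<^sup>2)"
      using wgt_bounds by (intro mult_right_mono sum_nonneg) auto
    also have "\<dots> \<le> (\<Sum>i\<in>{p..<n}. \<Sum>j\<in>{p..<n}. (H i j)\<^sup>2)"
      by simp (intro sum_mono member_le_sum, auto)
    finally show ?thesis .
  qed
  have tot: "(\<Sum>i<n. \<Sum>j<n. (H i j)\<^sup>2) = (\<Sum>i<p. \<Sum>j<p. (H i j)\<^sup>2) + (\<Sum>i<p. \<Sum>j\<in>{p..<n}. (H i j)\<^sup>2)
      + ((\<Sum>i\<in>{p..<n}. \<Sum>j<p. (H i j)\<^sup>2) + (\<Sum>i\<in>{p..<n}. \<Sum>j\<in>{p..<n}. (H i j)\<^sup>2))"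
  proof -
    have "(\<Sum>i<n. \<Sum>j<n. (H i j)\<^sup>2) = (\<Sum>i<n. (\<Sum>j<p. (H i j)\<^sup>2) + (\<Sum>j\<in>{p..<n}. (H i j)\<^sup>2))"
      by (intro sum.cong refl sum_split_at[OF pn'])
    also have "\<dots> = (\<Sum>i<p. (\<Sum>j<p. (H i j)\<^sup>2) + (\<Sum>j\<in>{p..<n}. (H i j)\<^sup>2))
        + (\<Sum>i\<in>{p..<n}. (\<Sum>j<p. (H i j)\<^sup>2) + (\<Sum>j\<in>{p..<n}. (H i j)\<^sup>2))"
      by (rule sum_split_at[OF pn'])
    finally show ?thesis by (simp add: sum.distrib)
  qed
  have gen: "\<And>x1 x2 x3 x4 y1 y2 y3 y4 :: real. x1 + x3 \<le> y1 \<Longrightarrow> x2 \<le> y2 + y3 \<Longrightarrow> x4 \<le> y4 \<Longrightarrow> x1 + x2 + x3 + x4 \<le> y1 + y2 + (y3 + y4)"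
    by linarith
  have "qf (E a) \<le> (\<Sum>i<n. \<Sum>j<n. (H i j)\<^sup>2)" unfolding qf_H tot by (rule gen[OF P1 P2 P3])
  also have "\<dots> = 1" unfolding H_def by (rule norm_HH[OF a])
  finally show "qf (E a) \<le> 1" .
qed

lemma realN: "real (dimS20 n) = real (n - 1) * real (n + 2) / 2"
proof -
  obtain m where m: "n = Suc m" using n1 by (cases n) auto
  have "(n - 1) * (n + 2) = 2 * (m * (m + 3) div 2)"
  proof -
    have "even (m * (m + 3))" by auto
    then show ?thesis unfolding m by (simp add: algebra_simps)
  qed
  then have "2 * dimS20 n = (n - 1) * (n + 2)" unfolding dimS20_def m by simp
  then have "2 * real (dimS20 n) = real (n - 1) * real (n + 2)" by (metis of_nat_mult of_nat_numeral)
  then show ?thesis by simp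
qed

lemma avg: "eig_avg (dimS20 n) lam = scal n R / (real n * real (n - 1))"
proof -
  have n0: "real n > 0" and n10: "real (n - 1) > 0" using n3 by auto
  have "eig_avg (dimS20 n) lam = (scal n R / 2 + scal n R / real n) / (real (n - 1) * real (n + 2) / 2)"
    unfolding eig_avg_def trace_lam realN ..
  also have "\<dots> = scal n R / (real n * real (n - 1))"
  proof -
    have r: "real (n - 1) = real n - 1" "real (n + 2) = real n + 2" using n1 by (auto simp: of_nat_diff)
    have h: "inverse (real n) * real n = 1" "inverse (real n - 1) * (real n - 1) = 1" "inverse (real n + 2) * (real n + 2) = 1"
      "inverse (2::real) * 2 = 1" using n0 n10 r by auto
    show ?thesis unfolding r divide_inverse inverse_mult_distrib inverse_inverse_eq using h by algebra
  qed
  finally show ?thesis .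
qed

lemma final:
  assumes sorted: "\<And>a b. a \<le> b \<and> b < dimS20 n \<longrightarrow> lam a \<le> lam b"
    and cone: "in_cone (dimS20 n) lam (real (n - 1) * real p / 2) \<theta>"
  shows "(\<Sum>i<p. ricci n R (e i) (e i))
           \<ge> real (n - 1) * real p / real (n - p + 2)
              * (1 - real (n - p + 1) * \<theta>) * eig_avg (dimS20 n) lam"
proof -
  define \<alpha> where "\<alpha> = real (n - 1) * real p / 2"
  define S where "S = scal n R"
  define SR where "SR = (\<Sum>i<p. ric i)"
  define m where "m = real (n - p)"
  have m0: "m > 0" unfolding m_def using pn by simp
  have n0: "real n > 0" and n10: "real (n - 1) > 0" using n3 by auto
  have a0: "\<alpha> > 0" unfolding \<alpha>_def using n3 p1 by simp
  have aN: "\<alpha> < real (dimS20 n)"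
  proof -
    have "real p < real (n + 2)" using pn by simp
    then have "real (n - 1) * real p < real (n - 1) * real (n + 2)" using n10 by simp
    then show ?thesis unfolding \<alpha>_def realN by (rule divide_strict_right_mono) simp
  qed
  have ky: "eig_partial_sum lam \<alpha> \<le> (\<Sum>a<dimS20 n. lam a * qf (E a))"
  proof (rule kyfan)
    show "lam a \<le> lam b" if "a \<le> b" "b < dimS20 n" for a b using sorted that by blast
    show "0 \<le> qf (E a)" if "a < dimS20 n" for a by (rule qf_bounds(1)[OF that])
    show "qf (E a) \<le> 1" if "a < dimS20 n" for a by (rule qf_bounds(2)[OF that])
    show "(\<Sum>a<dimS20 n. qf (E a)) = \<alpha>" unfolding \<alpha>_def by (rule sum_q)
    show "0 \<le> \<alpha>" using a0 by simp
    show "\<alpha> < real (dimS20 n)" by (rule aN)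
  qed
  have "eig_partial_sum lam \<alpha> / \<alpha> \<ge> - \<theta> * eig_avg (dimS20 n) lam"
    using cone unfolding in_cone_def \<alpha>_def by simp
  then have ps: "eig_partial_sum lam \<alpha> \<ge> - \<theta> * eig_avg (dimS20 n) lam * \<alpha>"
    using a0 by (simp add: pos_le_divide_eq)
  have hyp: "(m + 2) / (2 * (m + 1)) * SR \<ge> real p * S / (2 * real n * (m + 1)) - \<theta> * (S / (real n * real (n - 1))) * \<alpha>"
  proof -
    have gen2: "\<And>ps Y A B th X al :: real. ps \<le> Y \<Longrightarrow> - th * X * al \<le> ps \<Longrightarrow> Y = A - B \<Longrightarrow> B - th * X * al \<le> A"
      by (simp add: algebra_simps)
    show ?thesis unfolding S_def SR_def m_def by (rule gen2[OF ky ps[unfolded avg] value_q])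
  qed
  have c0: "(m + 2) / (2 * (m + 1)) > 0" using m0 by simp
  have SR_ge: "SR \<ge> (real p * S / (2 * real n * (m + 1)) - \<theta> * (S / (real n * real (n - 1))) * \<alpha>) / ((m + 2) / (2 * (m + 1)))"
    by (subst pos_divide_le_eq[OF c0]) (metis hyp mult.commute)
  have eq: "(real p * S / (2 * real n * (m + 1)) - \<theta> * (S / (real n * real (n - 1))) * \<alpha>) / ((m + 2) / (2 * (m + 1)))
      = real (n - 1) * real p / (m + 2) * (1 - (m + 1) * \<theta>) * (S / (real n * real (n - 1)))"
  proof -
    have r: "real (n - 1) = real n - 1" using n1 by (simp add: of_nat_diff)
    have h: "inverse (real n) * real n = 1" "inverse (real n - 1) * (real n - 1) = 1"
      "inverse (m + 1) * (m + 1) = 1" "inverse (m + 2) * (m + 2) = 1" "inverse (2::real) * 2 = 1"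
      using m0 n0 n10 r by auto
    show ?thesis unfolding \<alpha>_def r divide_inverse inverse_mult_distrib inverse_inverse_eq using h by algebra
  qed
  have e1: "real (n - p + 2) = m + 2" "real (n - p + 1) = m + 1" unfolding m_def by simp_all
  have sr: "(\<Sum>i<p. ricci n R (e i) (e i)) = SR" unfolding SR_def ric_def ..
  have "SR \<ge> real (n - 1) * real p / (m + 2) * (1 - (m + 1) * \<theta>) * (S / (real n * real (n - 1)))"
    using SR_ge by (simp only: eq)
  then show ?thesis unfolding e1 avg S_def[symmetric] sr .
qed

end

theorem proposition5p1:
  fixes n p :: nat and R :: "nat \<Rightarrow> nat \<Rightarrow> nat \<Rightarrow> nat \<Rightarrow> real"
    and lam :: "nat \<Rightarrow> real" and \<theta> :: real and e :: "nat \<Rightarrow> nat \<Rightarrow> real"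
  assumes "n \<ge> 3"
    and "alg_curv_tensor n R"
    and "sorted_eigenvalues_S20 n (Rring n R) lam"
    and "1 \<le> p" and "2 * p \<le> n"
    and "\<theta> > -1"
    and "in_cone (dimS20 n) lam (real (n - 1) * real p / 2) \<theta>"
    and "orthonormal_basis n e"
  shows "(\<Sum>i<p. ricci n R (e i) (e i))
           \<ge> real (n - 1) * real p / real (n - p + 2)
              * (1 - real (n - p + 1) * \<theta>) * eig_avg (dimS20 n) lam"
proof -
  from assms(3) obtain E where
    sorted: "\<And>a b. a \<le> b \<and> b < dimS20 n \<longrightarrow> lam a \<le> lam b" and
    EE: "\<forall>a<dimS20 n. E a \<in> S20 n \<and> Rring n R (E a) = (\<lambda>i j. lam a * E a i j)" and
    Eon: "\<forall>a<dimS20 n. \<forall>b<dimS20 n. tensor_inner n (E a) (E b) = (if a = b then 1 else 0)"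
    unfolding sorted_eigenvalues_S20_def by blast
  show ?thesis
    by (rule final[OF assms(2) assms(8) assms(1) assms(4) assms(5), of E lam])
       (use EE Eon sorted assms(7) in auto)
qed

end
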